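(* Let $A=(S^c)_{sa}$ be the self-adjoint part of $S^c$, regarded as an order unit space with order unit the identity $I$. Define $L:A\to\mathbb R_+$ by $$L(\phi)=\max_{i=1,2,3}\|\delta_i(\phi)\|_{\infty,\infty,1}.$$ Then $L$ is a Lip norm on $A$, that is: (i) $L(\phi)=0$ if and only if $\phi\in\mathbb R I$; (ii) the metric $\rho_L(\omega_1,\omega_2)=\sup\{|\omega_1(a)-\omega_2(a)|: a\in A,\ L(a)\le1\}$ on the state space $S(A)$ induces the weak-$*$ topology.
   Context: Let $\mathbb T=\mathbb R/\mathbb Z$ and $e(t)=e^{2\pi it}$. Fix a positive integer $c$ and real numbers $\hbar,\mu,\nu$ with $\mu^2+\nu^2\ne0$. $S^c$ is the space of $C^\infty$ functions $\Phi:\mathbb R\times\mathbb T\times\mathbb Z\to\mathbb C$ satisfying two conditions: (a) $\Phi(x+k,y,p)=e(ckpy)\Phi(x,y,p)$ for all $k\in\mathbb Z$; (b) for every polynomial $P$ on $\mathbb Z$, every $m,n\ge0$ and every compact $K\subset\mathbb R\times\mathbb T$, the function $P(p)\,\partial_x^m\partial_y^n\Phi$ is bounded on $K\times\mathbb Z$. Product and involution on $S^c$: $$(\Phi\star\Psi)(x,y,p)=\sum_{q}\Phi(x-\hbar(q-p)\mu,\,y-\hbar(q-p)\nu,\,q)\,\Psi(x-\hbar q\mu,\,y-\hbar q\nu,\,p-q),$$ $$\Phi^*(x,y,p)=\overline{\Phi(x,y,-p)}.$$ These act faithfully on $L^2(\mathbb R\times\mathbb T\times\mathbb Z)$ via $$(\pi(\Phi)\xi)(x,y,p)=\sum_q\Phi(x-\hbar(q-2p)\mu,\,y-\hbar(q-2p)\nu,\,q)\,\xi(x,y,p-q).$$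 The C*-norm $\|\cdot\|$ on $S^c$ is the operator norm of $\pi(\cdot)$. The identity $I$ is the function $(x,y,p)\mapsto\delta_{p0}$. The order on $A=(S^c)_{sa}$ is the one inherited from the C*-algebra (the norm closure of $\pi(S^c)$), and the norm on $A$ is the C*-norm. An order unit space is a real partially ordered vector space with a distinguished element $e$ satisfying two properties: for every $a$ there is $r\in\mathbb R$ with $a\le re$; and if $a\le re$ for all $r\ge0$, then $a\le0$. A state of $A$ is a bounded linear functional $\omega$ with $\omega(I)=1=\|\omega\|$. $S(A)$ denotes the set of states. The norm $\|\cdot\|_{\infty,\infty,1}$ is defined by $\|\phi\|_{\infty,\infty,1}=\sum_{p\in\mathbb Z}\sup_{x\in\mathbb R,y\in\mathbb T}|\phi(x,y,p)|$. The derivations (induced by the ergodic action of the Heisenberg group) are: $$\delta_1(\phi)(x,y,p)=-\frac{\partial\phi}{\partial x}(x,y,p),$$ $$\delta_2(\phi)(x,y,p)=2\pi i c p x\,\phi(x,y,p)-\frac{\partial\phi}{\partial y}(x,y,p),$$ $$\delta_3(\phi)(x,y,p)=2\pi i p\,\phi(x,y,p).$$ *)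

theory Defs
  imports "HOL-Analysis.Analysis" "HOL-Computational_Algebra.Polynomial"
begin

type_synonym fn3 = "real \<Rightarrow> real \<Rightarrow> int \<Rightarrow> complex"
type_synonym fn2 = "real \<Rightarrow> real \<Rightarrow> complex"

definition ee :: "real \<Rightarrow> complex" where
  "ee t = exp (2 * complex_of_real pi * \<i> * complex_of_real t)"

definition pdx :: "fn2 \<Rightarrow> fn2" where
  "pdx f = (\<lambda>x y. vector_derivative (\<lambda>t. f t y) (at x))"
definition pdy :: "fn2 \<Rightarrow> fn2" where
  "pdy f = (\<lambda>x y. vector_derivative (\<lambda>t. f x t) (at y))"

fun iter_pd :: "bool list \<Rightarrow> fn2 \<Rightarrow> fn2" where
  "iter_pd [] f = f"
| "iter_pd (d # ds) f = (if d then pdx else pdy) (iter_pd ds f)"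

definition smooth2 :: "fn2 \<Rightarrow> bool" where
  "smooth2 f \<longleftrightarrow> (\<forall>ds.
      continuous_on UNIV (\<lambda>z. iter_pd ds f (fst z) (snd z)) \<and>
      (\<forall>x y. (\<lambda>t. iter_pd ds f t y) differentiable (at x) \<and>
             (\<lambda>t. iter_pd ds f x t) differentiable (at y)))"

text \<open>The space S^c (functions on R x T x Z, represented as 1-periodic in the second variable).\<close>
definition Sc :: "nat \<Rightarrow> fn3 set" where
  "Sc c = {\<Phi>.
     (\<forall>p. smooth2 (\<lambda>x y. \<Phi> x y p)) \<and>
     (\<forall>x y p. \<Phi> x (y + 1) p = \<Phi> x y p) \<and>
     (\<forall>(k::int) x y p. \<Phi> (x + of_int k) y p = ee (real c * of_int k * of_int p * y) * \<Phi> x y p) \<and>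
     (\<forall>(P::complex poly) m n (K::(real \<times> real) set). compact K \<longrightarrow>
        bounded {poly P (of_int p) * (pdx ^^ m) ((pdy ^^ n) (\<lambda>x y. \<Phi> x y p)) x y
                 | x y p. (x, y) \<in> K})}"

definition star3 :: "fn3 \<Rightarrow> fn3" where
  "star3 \<Phi> = (\<lambda>x y p. cnj (\<Phi> x y (- p)))"

definition Asa :: "nat \<Rightarrow> fn3 set" where
  "Asa c = {\<Phi> \<in> Sc c. star3 \<Phi> = \<Phi>}"

definition unitI :: fn3 where
  "unitI = (\<lambda>x y p. if p = 0 then 1 else 0)"

text \<open>The representation on L^2(R x T x Z) (T realised as [0,1]).\<close>
definition piRep :: "real \<Rightarrow> real \<Rightarrow> real \<Rightarrow> fn3 \<Rightarrow> fn3 \<Rightarrow> fn3" where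
  "piRep hb mu nu \<Phi> \<xi> = (\<lambda>x y p.
     \<Sum>\<^sub>\<infinity>q::int. \<Phi> (x - hb * of_int (q - 2 * p) * mu) (y - hb * of_int (q - 2 * p) * nu) q
                    * \<xi> x y (p - q))"

definition l2nsq :: "fn3 \<Rightarrow> ennreal" where
  "l2nsq \<xi> = (\<integral>\<^sup>+ p. (\<integral>\<^sup>+ z \<in> (UNIV \<times> {0..1}). ennreal ((cmod (\<xi> (fst z) (snd z) p))\<^sup>2) \<partial>lborel)
              \<partial>count_space UNIV)"

definition L2fun :: "fn3 \<Rightarrow> bool" where
  "L2fun \<xi> \<longleftrightarrow> (\<forall>p. (\<lambda>z::real\<times>real. \<xi> (fst z) (snd z) p) \<in> borel_measurable lborel) \<and> l2nsq \<xi> < \<infinity>"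

definition cnorm :: "real \<Rightarrow> real \<Rightarrow> real \<Rightarrow> fn3 \<Rightarrow> real" where
  "cnorm hb mu nu \<Phi> = sqrt (enn2real
     (SUP \<xi> \<in> {\<xi>. L2fun \<xi> \<and> l2nsq \<xi> \<le> 1}. l2nsq (piRep hb mu nu \<Phi> \<xi>)))"

text \<open>States of A: bounded real-linear functionals with omega(I) = 1 = norm omega
  (taken extensional on A so that a state is determined by its values on A).\<close>
definition states :: "nat \<Rightarrow> real \<Rightarrow> real \<Rightarrow> real \<Rightarrow> (fn3 \<Rightarrow> real) set" where
  "states c hb mu nu = {\<omega> \<in> extensional (Asa c).
     (\<forall>a\<in>Asa c. \<forall>b\<in>Asa c. \<omega> (\<lambda>x y p. a x y p + b x y p) = \<omega> a + \<omega> b) \<and>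
     (\<forall>a\<in>Asa c. \<forall>r::real. \<omega> (\<lambda>x y p. complex_of_real r * a x y p) = r * \<omega> a) \<and>
     (\<exists>B. \<forall>a\<in>Asa c. \<bar>\<omega> a\<bar> \<le> B * cnorm hb mu nu a) \<and>
     \<omega> unitI = 1 \<and>
     Sup {\<bar>\<omega> a\<bar> | a. a \<in> Asa c \<and> cnorm hb mu nu a \<le> 1} = 1}"

definition weakstar :: "nat \<Rightarrow> real \<Rightarrow> real \<Rightarrow> real \<Rightarrow> (fn3 \<Rightarrow> real) topology" where
  "weakstar c hb mu nu = subtopology (product_topology (\<lambda>_. euclideanreal) UNIV) (states c hb mu nu)"

definition delta1 :: "fn3 \<Rightarrow> fn3" where
  "delta1 \<phi> = (\<lambda>x y p. - vector_derivative (\<lambda>t. \<phi> t y p) (at x))"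
definition delta2 :: "nat \<Rightarrow> fn3 \<Rightarrow> fn3" where
  "delta2 c \<phi> = (\<lambda>x y p. 2 * complex_of_real pi * \<i> * of_nat c * of_int p * complex_of_real x * \<phi> x y p
                       - vector_derivative (\<lambda>t. \<phi> x t p) (at y))"
definition delta3 :: "fn3 \<Rightarrow> fn3" where
  "delta3 \<phi> = (\<lambda>x y p. 2 * complex_of_real pi * \<i> * of_int p * \<phi> x y p)"

definition norm_ii1 :: "fn3 \<Rightarrow> real" where
  "norm_ii1 \<psi> = (\<Sum>\<^sub>\<infinity>p::int. (SUP z \<in> (UNIV::(real\<times>real) set). cmod (\<psi> (fst z) (snd z) p)))"

definition Lip :: "nat \<Rightarrow> fn3 \<Rightarrow> real" where
  "Lip c \<phi> = max (norm_ii1 (delta1 \<phi>)) (max (norm_ii1 (delta2 c \<phi>)) (norm_ii1 (delta3 \<phi>)))"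

definition rhoL :: "nat \<Rightarrow> (fn3 \<Rightarrow> real) \<Rightarrow> (fn3 \<Rightarrow> real) \<Rightarrow> ereal" where
  "rhoL c \<omega>1 \<omega>2 = Sup {ereal \<bar>\<omega>1 a - \<omega>2 a\<bar> | a. a \<in> Asa c \<and> Lip c a \<le> 1}"

end

theory Submission
  imports Defs
begin


lemma vd_lin:
  fixes f g :: "real \<Rightarrow> complex"
  assumes "f differentiable (at x)" "g differentiable (at x)"
  shows "vector_derivative (\<lambda>t. \<alpha> * f t + \<beta> * g t) (at x)
       = \<alpha> * vector_derivative f (at x) + \<beta> * vector_derivative g (at x)"
proof -
  have "(f has_vector_derivative vector_derivative f (at x)) (at x)"
       "(g has_vector_derivative vector_derivative g (at x)) (at x)"
    using assms vector_derivative_works by blast+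
  hence "((\<lambda>t. \<alpha> * f t + \<beta> * g t) has_vector_derivative
     \<alpha> * vector_derivative f (at x) + \<beta> * vector_derivative g (at x)) (at x)"
    by (intro has_vector_derivative_add has_vector_derivative_mult_right)
  thus ?thesis by (rule vector_derivative_at)
qed

lemma diff_lin:
  fixes f g :: "real \<Rightarrow> complex"
  assumes "f differentiable (at x)" "g differentiable (at x)"
  shows "(\<lambda>t. \<alpha> * f t + \<beta> * g t) differentiable (at x)"
  using assms by (intro derivative_intros) 

lemma iter_pd_lin:
  assumes "smooth2 f" "smooth2 g"
  shows "iter_pd ds (\<lambda>x y. \<alpha> * f x y + \<beta> * g x y) = (\<lambda>x y. \<alpha> * iter_pd ds f x y + \<beta> * iter_pd ds g x y)"
proof (induction ds)
  case Nil
  then show ?case by simp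
next
  case (Cons d ds)
  have df: "\<And>x y. (\<lambda>t. iter_pd ds f t y) differentiable (at x) \<and> (\<lambda>t. iter_pd ds f x t) differentiable (at y)"
    using assms(1) unfolding smooth2_def by blast
  have dg: "\<And>x y. (\<lambda>t. iter_pd ds g t y) differentiable (at x) \<and> (\<lambda>t. iter_pd ds g x t) differentiable (at y)"
    using assms(2) unfolding smooth2_def by blast
  show ?case
  proof (cases d)
    case True
    then show ?thesis using Cons df dg by (auto simp: pdx_def vd_lin)
  next
    case False
    then show ?thesis using Cons df dg by (auto simp: pdy_def vd_lin)
  qed
qed

lemma smooth2_lin:
  assumes "smooth2 f" "smooth2 g"
  shows "smooth2 (\<lambda>x y. \<alpha> * f x y + \<beta> * g x y)"
  unfolding smooth2_def iter_pd_lin[OF assms]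
proof (intro allI conjI)
  fix ds x y
  have c: "continuous_on UNIV (\<lambda>z. iter_pd ds f (fst z) (snd z))" "continuous_on UNIV (\<lambda>z. iter_pd ds g (fst z) (snd z))"
    using assms unfolding smooth2_def by blast+
  show "continuous_on UNIV (\<lambda>z. \<alpha> * iter_pd ds f (fst z) (snd z) + \<beta> * iter_pd ds g (fst z) (snd z))"
    using c by (intro continuous_intros)
  have df: "(\<lambda>t. iter_pd ds f t y) differentiable (at x) \<and> (\<lambda>t. iter_pd ds f x t) differentiable (at y)"
    using assms(1) unfolding smooth2_def by blast
  have dg: "(\<lambda>t. iter_pd ds g t y) differentiable (at x) \<and> (\<lambda>t. iter_pd ds g x t) differentiable (at y)"
    using assms(2) unfolding smooth2_def by blast
  show "(\<lambda>t. \<alpha> * iter_pd ds f t y + \<beta> * iter_pd ds g t y) differentiable at x"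
    using df dg by (intro diff_lin) auto
  show "(\<lambda>t. \<alpha> * iter_pd ds f x t + \<beta> * iter_pd ds g x t) differentiable at y"
    using df dg by (intro diff_lin) auto
qed

lemma funpow_pdy: "(pdy ^^ n) f = iter_pd (replicate n False) f"
  by (induction n) auto

lemma funpow_pdx: "(pdx ^^ m) (iter_pd ds f) = iter_pd (replicate m True @ ds) f"
  by (induction m) auto

lemma pdxy_iter: "(pdx ^^ m) ((pdy ^^ n) f) = iter_pd (replicate m True @ replicate n False) f"
  by (simp add: funpow_pdy funpow_pdx)

lemma Sc_lin:
  assumes a: "a \<in> Sc c" and b: "b \<in> Sc c"
  shows "(\<lambda>x y p. \<alpha> * a x y p + \<beta> * b x y p) \<in> Sc c"
proof -
  have sa: "\<And>p. smooth2 (\<lambda>x y. a x y p)" and sb: "\<And>p. smooth2 (\<lambda>x y. b x y p)"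
    using a b unfolding Sc_def by auto
  have qa: "\<And>(k::int) x y p. a (x + of_int k) y p = ee (real c * of_int k * of_int p * y) * a x y p"
    and qb: "\<And>(k::int) x y p. b (x + of_int k) y p = ee (real c * of_int k * of_int p * y) * b x y p"
    using a b unfolding Sc_def by auto
  have pa: "\<And>x y p. a x (y+1) p = a x y p" and pb: "\<And>x y p. b x (y+1) p = b x y p"
    using a b unfolding Sc_def by auto
  have ba: "\<And>(P::complex poly) m n (K::(real \<times> real) set). compact K \<Longrightarrow>
        bounded {poly P (of_int p) * (pdx ^^ m) ((pdy ^^ n) (\<lambda>x y. a x y p)) x y | x y p. (x, y) \<in> K}"
   and bb: "\<And>(P::complex poly) m n (K::(real \<times> real) set). compact K \<Longrightarrow>
        bounded {poly P (of_int p) * (pdx ^^ m) ((pdy ^^ n) (\<lambda>x y. b x y p)) x y | x y p. (x, y) \<in> K}"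
    using a b unfolding Sc_def by auto
  show ?thesis unfolding Sc_def
  proof (intro CollectI conjI allI impI)
    fix p show "smooth2 (\<lambda>x y. \<alpha> * a x y p + \<beta> * b x y p)" using sa sb by (rule smooth2_lin)
  next
    fix x y p show "\<alpha> * a x (y + 1) p + \<beta> * b x (y + 1) p = \<alpha> * a x y p + \<beta> * b x y p"
      using pa pb by simp
  next
    fix k :: int and x y p
    show "\<alpha> * a (x + of_int k) y p + \<beta> * b (x + of_int k) y p =
         ee (real c * of_int k * of_int p * y) * (\<alpha> * a x y p + \<beta> * b x y p)"
      using qa qb by (simp add: algebra_simps)
  next
    fix P :: "complex poly" and m n and K :: "(real \<times> real) set"
    assume K: "compact K"
    obtain A where A: "\<forall>z\<in>{poly P (of_int p) * (pdx ^^ m) ((pdy ^^ n) (\<lambda>x y. a x y p)) x y | x y p. (x, y) \<in> K}. norm z \<le> A"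
      using ba[OF K] unfolding bounded_iff by blast
    obtain B where B: "\<forall>z\<in>{poly P (of_int p) * (pdx ^^ m) ((pdy ^^ n) (\<lambda>x y. b x y p)) x y | x y p. (x, y) \<in> K}. norm z \<le> B"
      using bb[OF K] unfolding bounded_iff by blast
    show "bounded {poly P (of_int p) * (pdx ^^ m) ((pdy ^^ n) (\<lambda>x y. \<alpha> * a x y p + \<beta> * b x y p)) x y |x y p. (x, y) \<in> K}"
      unfolding bounded_iff
    proof (intro exI ballI)
      fix z assume "z \<in> {poly P (of_int p) * (pdx ^^ m) ((pdy ^^ n) (\<lambda>x y. \<alpha> * a x y p + \<beta> * b x y p)) x y |x y p. (x, y) \<in> K}"
      then obtain x y p where z: "z = poly P (of_int p) * (pdx ^^ m) ((pdy ^^ n) (\<lambda>x y. \<alpha> * a x y p + \<beta> * b x y p)) x y" and xy: "(x,y) \<in> K" by blast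
      have "z = \<alpha> * (poly P (of_int p) * (pdx ^^ m) ((pdy ^^ n) (\<lambda>x y. a x y p)) x y)
              + \<beta> * (poly P (of_int p) * (pdx ^^ m) ((pdy ^^ n) (\<lambda>x y. b x y p)) x y)"
        unfolding z pdxy_iter iter_pd_lin[OF sa sb] by (simp add: algebra_simps)
      also have "norm \<dots> \<le> norm \<alpha> * A + norm \<beta> * B"
      proof -
        have nA: "norm (poly P (of_int p) * (pdx ^^ m) ((pdy ^^ n) (\<lambda>x y. a x y p)) x y) \<le> A" using A xy by blast
        have nB: "norm (poly P (of_int p) * (pdx ^^ m) ((pdy ^^ n) (\<lambda>x y. b x y p)) x y) \<le> B" using B xy by blast
        show ?thesis
          by (rule order.trans[OF norm_triangle_ineq]) (metis (no_types, lifting) add_mono mult_left_mono nA nB norm_ge_zero norm_mult)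
      qed
      finally show "norm z \<le> norm \<alpha> * A + norm \<beta> * B" .
    qed
  qed
qed

lemma iter_pd_const: "iter_pd ds (\<lambda>x y. k) = (\<lambda>x y. if ds = [] then k else 0)"
proof (induction ds)
  case Nil then show ?case by simp
next
  case (Cons d ds) then show ?case by (cases ds) (auto simp: pdx_def pdy_def)
qed

lemma smooth2_const: "smooth2 (\<lambda>x y. k)"
  unfolding smooth2_def iter_pd_const by auto

lemma ee_0[simp]: "ee 0 = 1" by (simp add: ee_def)

lemma unitI_Sc: "unitI \<in> Sc c"
  unfolding Sc_def
proof (intro CollectI conjI allI impI)
  fix p show "smooth2 (\<lambda>x y. unitI x y p)" unfolding unitI_def by (rule smooth2_const)
next
  fix x y p show "unitI x (y + 1) p = unitI x y p" by (simp add: unitI_def)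
next
  fix k :: int and x y p show "unitI (x + of_int k) y p = ee (real c * of_int k * of_int p * y) * unitI x y p"
    by (simp add: unitI_def)
next
  fix P :: "complex poly" and m n and K :: "(real \<times> real) set"
  have "{poly P (of_int p) * (pdx ^^ m) ((pdy ^^ n) (\<lambda>x y. unitI x y p)) x y | x y p. (x, y) \<in> K}
        \<subseteq> {0, poly P 0}"
    unfolding pdxy_iter unitI_def
    by (auto simp: if_distrib iter_pd_const cong: if_cong)
  thus "bounded {poly P (of_int p) * (pdx ^^ m) ((pdy ^^ n) (\<lambda>x y. unitI x y p)) x y | x y p. (x, y) \<in> K}"
    by (rule bounded_subset[rotated]) auto
qed

lemma Asa_lin:
  assumes a: "a \<in> Asa c" and b: "b \<in> Asa c"
  shows "(\<lambda>x y p. complex_of_real \<alpha> * a x y p + complex_of_real \<beta> * b x y p) \<in> Asa c"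
proof -
  have "star3 a = a" "star3 b = b" using a b by (auto simp: Asa_def)
  hence sa: "\<And>x y p. cnj (a x y (-p)) = a x y p" and sb: "\<And>x y p. cnj (b x y (-p)) = b x y p"
    unfolding star3_def by (metis)+
  show ?thesis using a b unfolding Asa_def
    by (auto intro!: Sc_lin simp: star3_def fun_eq_iff sa sb)
qed

lemma unitI_Asa: "unitI \<in> Asa c"
proof -
  have "star3 unitI = unitI" by (auto simp: star3_def unitI_def fun_eq_iff)
  thus ?thesis unfolding Asa_def using unitI_Sc by blast
qed


definition per :: "fn3 \<Rightarrow> bool" where
  "per g \<longleftrightarrow> (\<forall>x y p (k::int). cmod (g (x + of_int k) y p) = cmod (g x y p) \<and> cmod (g x (y + of_int k) p) = cmod (g x y p))"

lemma per_reduce: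
  assumes "per g"
  shows "cmod (g x y p) = cmod (g (x - of_int \<lfloor>x\<rfloor>) (y - of_int \<lfloor>y\<rfloor>) p)"
proof -
  have "cmod (g x y p) = cmod (g ((x - of_int \<lfloor>x\<rfloor>) + of_int \<lfloor>x\<rfloor>) y p)" by simp
  also have "\<dots> = cmod (g (x - of_int \<lfloor>x\<rfloor>) y p)" using assms unfolding per_def by (simp only:)
  also have "\<dots> = cmod (g (x - of_int \<lfloor>x\<rfloor>) ((y - of_int \<lfloor>y\<rfloor>) + of_int \<lfloor>y\<rfloor>) p)" by simp
  also have "\<dots> = cmod (g (x - of_int \<lfloor>x\<rfloor>) (y - of_int \<lfloor>y\<rfloor>) p)" using assms unfolding per_def by (simp only:)
  finally show ?thesis .
qed

lemma per_bound:
  assumes "per g" "\<And>x y. 0 \<le> x \<Longrightarrow> x \<le> 1 \<Longrightarrow> 0 \<le> y \<Longrightarrow> y \<le> 1 \<Longrightarrow> cmod (g x y p) \<le> B"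
  shows "cmod (g x y p) \<le> B"
proof -
  have "cmod (g x y p) = cmod (g (x - of_int \<lfloor>x\<rfloor>) (y - of_int \<lfloor>y\<rfloor>) p)" by (rule per_reduce[OF assms(1)])
  also have "\<dots> \<le> B"
  proof (rule assms(2))
    show "0 \<le> x - of_int \<lfloor>x\<rfloor>" "x - of_int \<lfloor>x\<rfloor> \<le> 1" "0 \<le> y - of_int \<lfloor>y\<rfloor>" "y - of_int \<lfloor>y\<rfloor> \<le> 1"
      using frac_ge_0[of x] frac_lt_1[of x] frac_ge_0[of y] frac_lt_1[of y] unfolding frac_def by linarith+
  qed
  finally show ?thesis .
qed

lemma int_periodic:
  fixes f :: "real \<Rightarrow> 'a"
  assumes "\<And>y. f (y + 1) = f y"
  shows "f (y + of_int k) = f y"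
proof -
  have nat: "f (y + of_nat n) = f y" for y n
  proof (induction n arbitrary: y)
    case 0 then show ?case by simp
  next
    case (Suc n)
    have "f (y + of_nat (Suc n)) = f ((y + of_nat n) + 1)" by (simp add: algebra_simps)
    also have "\<dots> = f (y + of_nat n)" by (rule assms)
    finally show ?case using Suc by simp
  qed
  show ?thesis
  proof (cases "k \<ge> 0")
    case True
    then obtain n where "k = int n" by (metis nonneg_eq_int)
    then show ?thesis using nat by simp
  next
    case False
    then obtain n where k: "k = - int n" using nonneg_eq_int[of "-k"] by (metis minus_minus neg_0_le_iff_le linorder_linear)
    have "f (y + of_int k) = f ((y + of_int k) + of_nat n)" using nat by simp
    also have "\<dots> = f y" using k by simp
    finally show ?thesis .
  qed
qed

lemma norm_ee[simp]: "cmod (ee t) = 1"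
proof -
  have "ee t = exp (\<i> * complex_of_real (2 * pi * t))" by (simp add: ee_def algebra_simps)
  thus ?thesis by (simp add: norm_exp_i_times)
qed

lemma Sc_all: "a \<in> Sc c \<Longrightarrow> (\<forall>p. smooth2 (\<lambda>x y. a x y p)) \<and>
     (\<forall>x y p. a x (y + 1) p = a x y p) \<and>
     (\<forall>(k::int) x y p. a (x + of_int k) y p = ee (real c * of_int k * of_int p * y) * a x y p) \<and>
     (\<forall>(P::complex poly) m n (K::(real \<times> real) set). compact K \<longrightarrow>
        bounded {poly P (of_int p) * (pdx ^^ m) ((pdy ^^ n) (\<lambda>x y. a x y p)) x y
                 | x y p. (x, y) \<in> K})"
  unfolding Sc_def mem_Collect_eq by assumption

lemma Sc_smooth: "a \<in> Sc c \<Longrightarrow> smooth2 (\<lambda>x y. a x y p)"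
proof -
  assume "a \<in> Sc c"
  note h = Sc_all[OF this, THEN conjunct1]
  show ?thesis by (rule h[rule_format])
qed
lemma Sc_yper: "a \<in> Sc c \<Longrightarrow> a x (y + 1) p = a x y p"
proof -
  assume "a \<in> Sc c"
  note h = Sc_all[OF this, THEN conjunct2, THEN conjunct1]
  show ?thesis by (rule h[rule_format])
qed
lemma Sc_qp: "a \<in> Sc c \<Longrightarrow> a (x + of_int k) y p = ee (real c * of_int k * of_int p * y) * a x y p"
proof -
  assume "a \<in> Sc c"
  note h = Sc_all[OF this, THEN conjunct2, THEN conjunct2, THEN conjunct1]
  show ?thesis by (rule h[rule_format])
qed
lemma Sc_bdd: "a \<in> Sc c \<Longrightarrow> compact K \<Longrightarrow>
        bounded {poly P (of_int p) * (pdx ^^ m) ((pdy ^^ n) (\<lambda>x y. a x y p)) x y | x y p. (x, y) \<in> K}"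
proof -
  assume "a \<in> Sc c" "compact K"
  note h = Sc_all[OF \<open>a \<in> Sc c\<close>, THEN conjunct2, THEN conjunct2, THEN conjunct2]
  show ?thesis by (rule h[rule_format, OF \<open>compact K\<close>])
qed

lemma Sc_yper_int: assumes "a \<in> Sc c" shows "a x (y + of_int k) p = a x y p"
proof -
  have "\<And>y. (\<lambda>y. a x y p) (y + 1) = (\<lambda>y. a x y p) y" using Sc_yper[OF assms] by simp
  hence "(\<lambda>y. a x y p) (y + of_int k) = (\<lambda>y. a x y p) y" by (rule int_periodic)
  thus ?thesis by simp
qed

lemma smooth2_diff:
  assumes "smooth2 f"
  shows "(\<lambda>t. f t y) differentiable (at x)" "(\<lambda>t. f x t) differentiable (at y)"
proof -
  have "(\<lambda>t. iter_pd [] f t y) differentiable (at x) \<and> (\<lambda>t. iter_pd [] f x t) differentiable (at y)"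
    using assms unfolding smooth2_def by blast
  thus "(\<lambda>t. f t y) differentiable (at x)" "(\<lambda>t. f x t) differentiable (at y)" by simp_all
qed

lemma Sc_diff_x: "a \<in> Sc c \<Longrightarrow> (\<lambda>t. a t y p) differentiable (at x)"
  using smooth2_diff(1)[OF Sc_smooth] by blast

lemma Sc_diff_y: "a \<in> Sc c \<Longrightarrow> (\<lambda>t. a x t p) differentiable (at y)"
  using smooth2_diff(2)[OF Sc_smooth] by blast

lemma vd_shift:
  fixes f :: "real \<Rightarrow> complex"
  assumes "f differentiable (at (x + k))"
  shows "vector_derivative (\<lambda>t. f (t + k)) (at x) = vector_derivative f (at (x + k))"
proof -
  have "((\<lambda>t. t + k) has_vector_derivative 1) (at x)"
    by (auto intro!: derivative_eq_intros)
  moreover have "(f has_vector_derivative vector_derivative f (at (x + k))) (at ((\<lambda>t. t + k) x))"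
    using assms vector_derivative_works by auto
  ultimately have "(f \<circ> (\<lambda>t. t + k) has_vector_derivative 1 *\<^sub>R vector_derivative f (at (x + k))) (at x)"
    by (rule vector_diff_chain_at)
  thus ?thesis by (intro vector_derivative_at) (simp add: o_def)
qed

lemma ee_deriv: "((\<lambda>t. ee (r * t)) has_vector_derivative (2 * complex_of_real pi * \<i> * complex_of_real r * ee (r * t))) (at t)"
proof -
  have "((\<lambda>t. 2 * complex_of_real pi * \<i> * complex_of_real (r * t)) has_vector_derivative (2 * complex_of_real pi * \<i> * complex_of_real r)) (at t)"
  proof -
    have "((\<lambda>t. complex_of_real (r * t)) has_vector_derivative complex_of_real r) (at t)"
    proof -
      have "((\<lambda>t. r * t) has_real_derivative r) (at t)" by (auto intro!: derivative_eq_intros)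
      hence "((\<lambda>t. of_real (r * t)) has_vector_derivative of_real r) (at t)"
        by (rule has_vector_derivative_of_real)
      thus ?thesis .
    qed
    thus ?thesis by (rule has_vector_derivative_mult_right)
  qed
  moreover have "(exp has_field_derivative exp (2 * complex_of_real pi * \<i> * complex_of_real (r * t))) (at ((\<lambda>t. 2 * complex_of_real pi * \<i> * complex_of_real (r * t)) t))"
    by (rule DERIV_exp)
  ultimately have "(exp \<circ> (\<lambda>t. 2 * complex_of_real pi * \<i> * complex_of_real (r * t)) has_vector_derivative
      (2 * complex_of_real pi * \<i> * complex_of_real r) * exp (2 * complex_of_real pi * \<i> * complex_of_real (r * t))) (at t)"
    by (rule field_vector_diff_chain_at)
  thus ?thesis by (simp add: ee_def o_def)
qed


lemma per_Sc: assumes "a \<in> Sc c" shows "per a"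
  unfolding per_def
proof (intro allI conjI)
  fix x y p and k :: int
  show "cmod (a (x + of_int k) y p) = cmod (a x y p)"
    using Sc_qp[OF assms] by (simp add: norm_mult)
  show "cmod (a x (y + of_int k) p) = cmod (a x y p)"
    using Sc_yper_int[OF assms] by simp
qed

lemma vd_cmult:
  fixes f :: "real \<Rightarrow> complex"
  assumes "f differentiable (at x)"
  shows "vector_derivative (\<lambda>t. \<alpha> * f t) (at x) = \<alpha> * vector_derivative f (at x)"
  using vd_lin[OF assms assms, of \<alpha> 0] by simp

lemma delta1_shift:
  assumes "a \<in> Sc c"
  shows "delta1 a (x + of_int k) y p = ee (real c * of_int k * of_int p * y) * delta1 a x y p"
proof -
  have "vector_derivative (\<lambda>t. a t y p) (at (x + of_int k)) = vector_derivative (\<lambda>t. a (t + of_int k) y p) (at x)"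
    by (rule vd_shift[symmetric]) (rule Sc_diff_x[OF assms])
  also have "(\<lambda>t. a (t + of_int k) y p) = (\<lambda>t. ee (real c * of_int k * of_int p * y) * a t y p)"
    using Sc_qp[OF assms] by (simp add: fun_eq_iff)
  also have "vector_derivative \<dots> (at x) = ee (real c * of_int k * of_int p * y) * vector_derivative (\<lambda>t. a t y p) (at x)"
    by (rule vd_cmult) (rule Sc_diff_x[OF assms])
  finally show ?thesis unfolding delta1_def by simp
qed

lemma per_delta1: assumes "a \<in> Sc c" shows "per (delta1 a)"
  unfolding per_def
proof (intro allI conjI)
  fix x y p and k :: int
  show "cmod (delta1 a (x + of_int k) y p) = cmod (delta1 a x y p)"
    using delta1_shift[OF assms] by (simp add: norm_mult)
  have "(\<lambda>t. a t (y + of_int k) p) = (\<lambda>t. a t y p)" using Sc_yper_int[OF assms] by (simp add: fun_eq_iff)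
  thus "cmod (delta1 a x (y + of_int k) p) = cmod (delta1 a x y p)"
    unfolding delta1_def by simp
qed

lemma delta2_shift:
  assumes "a \<in> Sc c"
  shows "delta2 c a (x + of_int k) y p = ee (real c * of_int k * of_int p * y) * delta2 c a x y p"
proof -
  define r where "r = real c * of_int k * of_int p"
  have fe: "(\<lambda>t. a (x + of_int k) t p) = (\<lambda>t. ee (r * t) * a x t p)"
    using Sc_qp[OF assms] by (simp add: fun_eq_iff r_def)
  have "((\<lambda>t. ee (r * t) * a x t p) has_vector_derivative
        ee (r * y) * vector_derivative (\<lambda>t. a x t p) (at y) + (2 * complex_of_real pi * \<i> * complex_of_real r * ee (r * y)) * a x y p) (at y)"
    by (rule has_vector_derivative_mult[OF ee_deriv]) (use Sc_diff_y[OF assms] vector_derivative_works in blast)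
  hence vd: "vector_derivative (\<lambda>t. a (x + of_int k) t p) (at y) =
        ee (r * y) * vector_derivative (\<lambda>t. a x t p) (at y) + (2 * complex_of_real pi * \<i> * complex_of_real r * ee (r * y)) * a x y p"
    unfolding fe by (rule vector_derivative_at)
  have ak: "a (x + of_int k) y p = ee (r * y) * a x y p"
    using Sc_qp[OF assms] by (simp add: r_def)
  show ?thesis
    unfolding delta2_def vd ak r_def[symmetric]
    by (simp add: r_def algebra_simps)
qed

lemma per_delta2: assumes "a \<in> Sc c" shows "per (delta2 c a)"
  unfolding per_def
proof (intro allI conjI)
  fix x y p and k :: int
  show "cmod (delta2 c a (x + of_int k) y p) = cmod (delta2 c a x y p)"
    using delta2_shift[OF assms] by (simp add: norm_mult)
  have "vector_derivative (\<lambda>t. a x t p) (at (y + of_int k)) = vector_derivative (\<lambda>t. a x (t + of_int k) p) (at y)"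
    by (rule vd_shift[symmetric]) (rule Sc_diff_y[OF assms])
  also have "(\<lambda>t. a x (t + of_int k) p) = (\<lambda>t. a x t p)" using Sc_yper_int[OF assms] by (simp add: fun_eq_iff)
  finally show "cmod (delta2 c a x (y + of_int k) p) = cmod (delta2 c a x y p)"
    unfolding delta2_def using Sc_yper_int[OF assms] by simp
qed

lemma per_delta3: assumes "a \<in> Sc c" shows "per (delta3 a)"
  using per_Sc[OF assms] unfolding per_def delta3_def by (simp add: norm_mult)


definition sp :: "fn3 \<Rightarrow> int \<Rightarrow> real" where
  "sp g p = (SUP z\<in>(UNIV::(real\<times>real) set). cmod (g (fst z) (snd z) p))"

lemma norm_ii1_sp: "norm_ii1 g = (\<Sum>\<^sub>\<infinity>p. sp g p)"
  unfolding norm_ii1_def sp_def by simp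

lemma sp_le: assumes "\<And>x y. cmod (g x y p) \<le> B" shows "sp g p \<le> B"
  unfolding sp_def by (rule cSUP_least) (auto intro: assms)

lemma bdd_sp: assumes "\<And>x y. cmod (g x y p) \<le> B"
  shows "bdd_above ((\<lambda>z. cmod (g (fst z) (snd z) p)) ` UNIV)"
  using assms by (auto intro!: bdd_aboveI)

lemma le_sp: assumes "\<And>x y. cmod (g x y p) \<le> B" shows "cmod (g x y p) \<le> sp g p"
proof -
  have "cmod (g (fst (x,y)) (snd (x,y)) p) \<le> sp g p"
    unfolding sp_def by (rule cSUP_upper[OF _ bdd_sp[of g p B, OF assms]]) simp
  thus ?thesis by simp
qed

lemma sp_nonneg: assumes "\<And>x y. cmod (g x y p) \<le> B" shows "0 \<le> sp g p"
  using le_sp[of g p B, OF assms, of 0 0] norm_ge_zero[of "g 0 0 p"] by linarith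

lemma per_bound2:
  assumes "per g" "\<And>x y. 0 \<le> x \<Longrightarrow> x \<le> 1 \<Longrightarrow> 0 \<le> y \<Longrightarrow> y \<le> 1 \<Longrightarrow> Q (cmod (g x y p))"
  shows "Q (cmod (g x y p))"
proof -
  have "cmod (g x y p) = cmod (g (x - of_int \<lfloor>x\<rfloor>) (y - of_int \<lfloor>y\<rfloor>) p)" by (rule per_reduce[OF assms(1)])
  moreover have "Q (cmod (g (x - of_int \<lfloor>x\<rfloor>) (y - of_int \<lfloor>y\<rfloor>) p))"
  proof (rule assms(2))
    show "0 \<le> x - of_int \<lfloor>x\<rfloor>" "x - of_int \<lfloor>x\<rfloor> \<le> 1" "0 \<le> y - of_int \<lfloor>y\<rfloor>" "y - of_int \<lfloor>y\<rfloor> \<le> 1"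
      using frac_ge_0[of x] frac_lt_1[of x] frac_ge_0[of y] frac_lt_1[of y] unfolding frac_def by linarith+
  qed
  ultimately show ?thesis by simp
qed

lemma Sc_bnd01:
  assumes "a \<in> Sc c"
  shows "\<exists>B. \<forall>p x y. 0 \<le> x \<longrightarrow> x \<le> 1 \<longrightarrow> 0 \<le> y \<longrightarrow> y \<le> 1 \<longrightarrow>
     cmod (poly P (of_int p) * (pdx ^^ m) ((pdy ^^ n) (\<lambda>x y. a x y p)) x y) \<le> B"
proof -
  have "compact ({0..1::real} \<times> {0..1::real})" by (simp add: compact_Times)
  from Sc_bdd[OF assms this, of P m n] obtain B where
    B: "\<forall>z\<in>{poly P (of_int p) * (pdx ^^ m) ((pdy ^^ n) (\<lambda>x y. a x y p)) x y | x y p. (x, y) \<in> {0..1} \<times> {0..1}}. cmod z \<le> B"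
    unfolding bounded_iff by blast
  show ?thesis
  proof (intro exI allI impI)
    fix p :: int
    fix x y :: real assume h: "0 \<le> x" "x \<le> 1" "0 \<le> y" "y \<le> 1"
    have "poly P (of_int p) * (pdx ^^ m) ((pdy ^^ n) (\<lambda>x y. a x y p)) x y \<in>
      {poly P (of_int p) * (pdx ^^ m) ((pdy ^^ n) (\<lambda>x y. a x y p)) x y | x y p. (x, y) \<in> {0..1} \<times> {0..1}}"
      using h by (intro CollectI exI conjI[OF refl]) simp
    thus "cmod (poly P (of_int p) * (pdx ^^ m) ((pdy ^^ n) (\<lambda>x y. a x y p)) x y) \<le> B" using B by blast
  qed
qed


definition decay :: "fn3 \<Rightarrow> bool" where
  "decay g \<longleftrightarrow> (\<exists>C. \<forall>x y p. (1 + (real_of_int p)\<^sup>2) * cmod (g x y p) \<le> C)"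

lemma poly1: "cmod (poly [:1,0,1:] (complex_of_int p) * z) = (1 + (real_of_int p)\<^sup>2) * cmod z"
proof -
  have e: "poly [:1,0,1:] (complex_of_int p) = complex_of_real (1 + (real_of_int p)\<^sup>2)"
    by (simp add: power2_eq_square)
  have "cmod (poly [:1,0,1:] (complex_of_int p) * z) = cmod (poly [:1,0,1:] (complex_of_int p)) * cmod z"
    by (rule norm_mult)
  also have "cmod (poly [:1,0,1:] (complex_of_int p)) = \<bar>1 + (real_of_int p)\<^sup>2\<bar>"
    unfolding e by (rule norm_of_real)
  also have "\<bar>1 + (real_of_int p)\<^sup>2\<bar> = 1 + (real_of_int p)\<^sup>2" by (simp add: add_nonneg_nonneg)
  finally show ?thesis .
qed

lemma poly2: "cmod (poly [:0,1,0,1:] (complex_of_int p) * z) = \<bar>real_of_int p\<bar> * (1 + (real_of_int p)\<^sup>2) * cmod z"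
proof -
  have e: "poly [:0,1,0,1:] (complex_of_int p) = complex_of_real (real_of_int p * (1 + (real_of_int p)\<^sup>2))"
    by (simp add: power2_eq_square algebra_simps)
  have "cmod (poly [:0,1,0,1:] (complex_of_int p) * z) = cmod (poly [:0,1,0,1:] (complex_of_int p)) * cmod z"
    by (rule norm_mult)
  also have "cmod (poly [:0,1,0,1:] (complex_of_int p)) = \<bar>real_of_int p * (1 + (real_of_int p)\<^sup>2)\<bar>"
    unfolding e by (rule norm_of_real)
  also have "\<bar>real_of_int p * (1 + (real_of_int p)\<^sup>2)\<bar> = \<bar>real_of_int p\<bar> * (1 + (real_of_int p)\<^sup>2)"
    by (simp add: abs_mult add_nonneg_nonneg)
  finally show ?thesis .
qed

lemma decay_a: assumes "a \<in> Sc c" shows "decay a"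
proof -
  obtain B where B: "\<forall>p x y. 0 \<le> x \<longrightarrow> x \<le> 1 \<longrightarrow> 0 \<le> y \<longrightarrow> y \<le> 1 \<longrightarrow>
     cmod (poly [:1,0,1:] (of_int p) * (pdx ^^ 0) ((pdy ^^ 0) (\<lambda>x y. a x y p)) x y) \<le> B"
    using Sc_bnd01[OF assms] by blast
  show ?thesis unfolding decay_def
  proof (intro exI allI)
    fix x y p
    show "(1 + (real_of_int p)\<^sup>2) * cmod (a x y p) \<le> B"
    proof (rule per_bound2[OF per_Sc[OF assms], where Q="\<lambda>v. (1 + (real_of_int p)\<^sup>2) * v \<le> B"])
      fix x y :: real assume h: "0 \<le> x" "x \<le> 1" "0 \<le> y" "y \<le> 1"
      have "cmod (poly [:1,0,1:] (of_int p) * (pdx ^^ 0) ((pdy ^^ 0) (\<lambda>x y. a x y p)) x y) \<le> B"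
        using B h by blast
      thus "(1 + (real_of_int p)\<^sup>2) * cmod (a x y p) \<le> B" by (simp only: poly1 funpow_0)
    qed
  qed
qed

lemma decay_d1: assumes "a \<in> Sc c" shows "decay (delta1 a)"
proof -
  obtain B where B: "\<forall>p x y. 0 \<le> x \<longrightarrow> x \<le> 1 \<longrightarrow> 0 \<le> y \<longrightarrow> y \<le> 1 \<longrightarrow>
     cmod (poly [:1,0,1:] (of_int p) * (pdx ^^ Suc 0) ((pdy ^^ 0) (\<lambda>x y. a x y p)) x y) \<le> B"
    using Sc_bnd01[OF assms] by blast
  show ?thesis unfolding decay_def
  proof (intro exI allI)
    fix x y p
    show "(1 + (real_of_int p)\<^sup>2) * cmod (delta1 a x y p) \<le> B"
    proof (rule per_bound2[OF per_delta1[OF assms], where Q="\<lambda>v. (1 + (real_of_int p)\<^sup>2) * v \<le> B"])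
      fix x y :: real assume h: "0 \<le> x" "x \<le> 1" "0 \<le> y" "y \<le> 1"
      have "cmod (poly [:1,0,1:] (of_int p) * (pdx ^^ Suc 0) ((pdy ^^ 0) (\<lambda>x y. a x y p)) x y) \<le> B"
        using B h by blast
      thus "(1 + (real_of_int p)\<^sup>2) * cmod (delta1 a x y p) \<le> B"
        by (simp only: poly1 funpow.simps o_def id_def pdx_def delta1_def norm_minus_cancel)
    qed
  qed
qed

lemma decay_d3: assumes "a \<in> Sc c" shows "decay (delta3 a)"
proof -
  obtain B where B: "\<forall>p x y. 0 \<le> x \<longrightarrow> x \<le> 1 \<longrightarrow> 0 \<le> y \<longrightarrow> y \<le> 1 \<longrightarrow>
     cmod (poly [:0,1,0,1:] (of_int p) * (pdx ^^ 0) ((pdy ^^ 0) (\<lambda>x y. a x y p)) x y) \<le> B"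
    using Sc_bnd01[OF assms] by blast
  show ?thesis unfolding decay_def
  proof (intro exI allI)
    fix x y p
    have "(1 + (real_of_int p)\<^sup>2) * cmod (delta3 a x y p) = 2 * pi * (\<bar>real_of_int p\<bar> * (1 + (real_of_int p)\<^sup>2) * cmod (a x y p))"
      by (simp add: delta3_def norm_mult)
    show "(1 + (real_of_int p)\<^sup>2) * cmod (delta3 a x y p) \<le> 2 * pi * B"
    proof (rule per_bound2[OF per_delta3[OF assms], where Q="\<lambda>v. (1 + (real_of_int p)\<^sup>2) * v \<le> 2 * pi * B"])
      fix x y :: real assume h: "0 \<le> x" "x \<le> 1" "0 \<le> y" "y \<le> 1"
      have "cmod (poly [:0,1,0,1:] (of_int p) * (pdx ^^ 0) ((pdy ^^ 0) (\<lambda>x y. a x y p)) x y) \<le> B"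
        using B h by blast
      hence b: "\<bar>real_of_int p\<bar> * (1 + (real_of_int p)\<^sup>2) * cmod (a x y p) \<le> B"
        by (simp only: poly2 funpow_0)
      have "(1 + (real_of_int p)\<^sup>2) * cmod (delta3 a x y p) = 2 * pi * (\<bar>real_of_int p\<bar> * (1 + (real_of_int p)\<^sup>2) * cmod (a x y p))"
        by (simp add: delta3_def norm_mult)
      also have "\<dots> \<le> 2 * pi * B" using b by simp
      finally show "(1 + (real_of_int p)\<^sup>2) * cmod (delta3 a x y p) \<le> 2 * pi * B" .
    qed
  qed
qed

lemma decay_d2: assumes "a \<in> Sc c" shows "decay (delta2 c a)"
proof -
  obtain B1 where B1: "\<forall>p x y. 0 \<le> x \<longrightarrow> x \<le> 1 \<longrightarrow> 0 \<le> y \<longrightarrow> y \<le> 1 \<longrightarrow>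
     cmod (poly [:1,0,1:] (of_int p) * (pdx ^^ 0) ((pdy ^^ Suc 0) (\<lambda>x y. a x y p)) x y) \<le> B1"
    using Sc_bnd01[OF assms] by blast
  obtain B2 where B2: "\<forall>p x y. 0 \<le> x \<longrightarrow> x \<le> 1 \<longrightarrow> 0 \<le> y \<longrightarrow> y \<le> 1 \<longrightarrow>
     cmod (poly [:0,1,0,1:] (of_int p) * (pdx ^^ 0) ((pdy ^^ 0) (\<lambda>x y. a x y p)) x y) \<le> B2"
    using Sc_bnd01[OF assms] by blast
  show ?thesis unfolding decay_def
  proof (intro exI allI)
    fix x y p
    show "(1 + (real_of_int p)\<^sup>2) * cmod (delta2 c a x y p) \<le> 2 * pi * real c * B2 + B1"
    proof (rule per_bound2[OF per_delta2[OF assms], where Q="\<lambda>v. (1 + (real_of_int p)\<^sup>2) * v \<le> 2 * pi * real c * B2 + B1"])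
      fix x y :: real assume h: "0 \<le> x" "x \<le> 1" "0 \<le> y" "y \<le> 1"
      define w where "w = 1 + (real_of_int p)\<^sup>2"
      have w0: "w \<ge> 0" unfolding w_def by simp
      have b1: "w * cmod (vector_derivative (\<lambda>t. a x t p) (at y)) \<le> B1"
      proof -
        have "cmod (poly [:1,0,1:] (of_int p) * (pdx ^^ 0) ((pdy ^^ Suc 0) (\<lambda>x y. a x y p)) x y) \<le> B1"
          using B1 h by blast
        thus ?thesis unfolding w_def by (simp only: poly1 funpow.simps o_def id_def pdy_def)
      qed
      have b2: "\<bar>real_of_int p\<bar> * w * cmod (a x y p) \<le> B2"
      proof -
        have "cmod (poly [:0,1,0,1:] (of_int p) * (pdx ^^ 0) ((pdy ^^ 0) (\<lambda>x y. a x y p)) x y) \<le> B2"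
          using B2 h by blast
        thus ?thesis unfolding w_def by (simp only: poly2 funpow_0)
      qed
      have t1: "cmod (delta2 c a x y p) \<le> cmod (2 * complex_of_real pi * \<i> * of_nat c * of_int p * complex_of_real x * a x y p)
          + cmod (vector_derivative (\<lambda>t. a x t p) (at y))"
        unfolding delta2_def by (rule norm_triangle_ineq4)
      have t2: "cmod (2 * complex_of_real pi * \<i> * of_nat c * of_int p * complex_of_real x * a x y p)
           = 2 * pi * real c * \<bar>real_of_int p\<bar> * \<bar>x\<bar> * cmod (a x y p)"
        by (simp add: norm_mult)
      have t3: "2 * pi * real c * \<bar>real_of_int p\<bar> * \<bar>x\<bar> * cmod (a x y p) \<le> 2 * pi * real c * \<bar>real_of_int p\<bar> * cmod (a x y p)"
      proof -
        have "\<bar>x\<bar> \<le> 1" using h by simp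
        hence "2 * pi * real c * \<bar>real_of_int p\<bar> * \<bar>x\<bar> * cmod (a x y p) \<le> 2 * pi * real c * \<bar>real_of_int p\<bar> * 1 * cmod (a x y p)"
          by (intro mult_right_mono mult_left_mono) auto
        thus ?thesis by simp
      qed
      have X: "cmod (delta2 c a x y p) \<le> 2 * pi * real c * \<bar>real_of_int p\<bar> * cmod (a x y p) + cmod (vector_derivative (\<lambda>t. a x t p) (at y))"
        using t1 t2 t3 by linarith
      have "w * cmod (delta2 c a x y p) \<le> w * (2 * pi * real c * \<bar>real_of_int p\<bar> * cmod (a x y p) + cmod (vector_derivative (\<lambda>t. a x t p) (at y)))"
        by (rule mult_left_mono[OF X w0])
      also have "\<dots> = w * (2 * pi * real c * \<bar>real_of_int p\<bar> * cmod (a x y p)) + w * cmod (vector_derivative (\<lambda>t. a x t p) (at y))"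
        by (rule distrib_left)
      also have "\<dots> \<le> 2 * pi * real c * B2 + B1"
      proof -
        have "w * (2 * pi * real c * \<bar>real_of_int p\<bar> * cmod (a x y p)) = (2 * pi * real c) * (\<bar>real_of_int p\<bar> * w * cmod (a x y p))"
          by (simp add: algebra_simps)
        also have "\<dots> \<le> (2 * pi * real c) * B2" by (intro mult_left_mono b2) auto
        finally show ?thesis using b1 by linarith
      qed
      finally show "(1 + (real_of_int p)\<^sup>2) * cmod (delta2 c a x y p) \<le> 2 * pi * real c * B2 + B1"
        unfolding w_def .
    qed
  qed
qed

lemma summable_w: "(\<lambda>p::int. 1 / (1 + (real_of_int p)\<^sup>2)) summable_on UNIV"
proof -
  define f where "f = (\<lambda>p::int. 1 / (1 + (real_of_int p)\<^sup>2))"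
  have s0: "summable (\<lambda>n. inverse (real (Suc n) ^ 2))"
    using inverse_power_summable[of 2, where 'a=real] summable_Suc_iff[of "\<lambda>n. inverse (real n ^ 2)"]
    by simp
  have le: "1 / (1 + (real n)\<^sup>2) \<le> 2 * inverse (real (Suc n) ^ 2)" for n
  proof -
    have "(real n + 1)\<^sup>2 \<le> 2 * (1 + (real n)\<^sup>2)"
      using sum_squares_ge_zero[of "real n - 1" 0]
      by (simp add: power2_eq_square algebra_simps) 
    hence "(real (Suc n))^2 \<le> 2 * (1 + (real n)\<^sup>2)" by (simp add: add.commute)
    moreover have "(real (Suc n))^2 > 0" by simp
    moreover have "1 + (real n)^2 > 0" by (simp add: add_pos_nonneg)
    ultimately show ?thesis
      by (simp add: field_simps)
  qed
  have sn: "summable (\<lambda>n. 1 / (1 + (real n)\<^sup>2))"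
    by (rule summable_comparison_test[OF _ summable_mult[OF s0, of 2]]) (use le in auto)
  hence sn': "(\<lambda>n. 1 / (1 + (real n)\<^sup>2)) summable_on UNIV"
    by (rule summable_nonneg_imp_summable_on) (simp add: add_nonneg_nonneg)
  have A: "f summable_on range int"
    using sn' by (subst summable_on_reindex) (auto simp: o_def f_def)
  have sn2: "(\<lambda>n::nat. f (- int n - 1)) summable_on UNIV"
  proof (rule summable_on_comparison_test[OF sn'])
    fix n :: nat
    show "f (- int n - 1) \<le> 1 / (1 + (real n)\<^sup>2)"
      unfolding f_def by (intro divide_left_mono) (auto simp: power2_eq_square algebra_simps add_pos_nonneg)
    show "0 \<le> f (- int n - 1)" unfolding f_def by (simp add: add_nonneg_nonneg)
  qed
  have inj: "inj (\<lambda>n::nat. - int n - 1)" by (auto simp: inj_def)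
  have B: "f summable_on range (\<lambda>n::nat. - int n - 1)"
    using sn2 by (subst summable_on_reindex[OF inj]) (simp add: o_def)
  have U: "(UNIV::int set) = range int \<union> range (\<lambda>n::nat. - int n - 1)"
  proof -
    have "k \<in> range int \<union> range (\<lambda>n::nat. - int n - 1)" for k :: int
    proof (cases "k \<ge> 0")
      case True
      hence "k = int (nat k)" by simp
      thus ?thesis by blast
    next
      case False
      hence "k = - int (nat (- k - 1)) - 1" by simp
      thus ?thesis by blast
    qed
    thus ?thesis by blast
  qed
  have "f summable_on (range int \<union> range (\<lambda>n::nat. - int n - 1))"
    by (rule summable_on_Un_disjoint[OF A B]) auto
  thus ?thesis unfolding f_def[symmetric] U[symmetric] .
qed

lemma decay_sp:
  assumes "decay g"
  shows "(sp g) summable_on UNIV" "\<And>x y p. cmod (g x y p) \<le> sp g p" "\<And>p. 0 \<le> sp g p"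
    "\<And>p. \<exists>B. \<forall>x y. cmod (g x y p) \<le> B"
proof -
  obtain C where C: "\<And>x y p. (1 + (real_of_int p)\<^sup>2) * cmod (g x y p) \<le> C"
    using assms unfolding decay_def by blast
  have w: "0 < 1 + (real_of_int p)\<^sup>2" for p by (simp add: add_pos_nonneg)
  have bnd: "cmod (g x y p) \<le> C / (1 + (real_of_int p)\<^sup>2)" for x y p
    using C[of p x y] w[of p] by (simp add: field_simps)
  show "\<And>p. \<exists>B. \<forall>x y. cmod (g x y p) \<le> B" using bnd by blast
  show le: "\<And>x y p. cmod (g x y p) \<le> sp g p" by (rule le_sp[OF bnd])
  show nn: "\<And>p. 0 \<le> sp g p" by (rule sp_nonneg[OF bnd])
  show "(sp g) summable_on UNIV"
  proof (rule summable_on_comparison_test[OF summable_on_cmult_right[OF summable_w, of C]])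
    fix p :: int
    show "sp g p \<le> C * (1 / (1 + (real_of_int p)\<^sup>2))" using sp_le[OF bnd] by simp
    show "0 \<le> sp g p" by (rule nn)
  qed
qed


lemma term_le_infsum:
  fixes f :: "'a \<Rightarrow> real"
  assumes "f summable_on UNIV" "\<And>x. 0 \<le> f x"
  shows "f x \<le> infsum f UNIV"
  using finite_sum_le_infsum[OF assms(1), of "{x}"] assms(2) by simp

lemma Sc_decays:
  assumes "a \<in> Sc c"
  shows "decay a" "decay (delta1 a)" "decay (delta2 c a)" "decay (delta3 a)"
  using decay_a decay_d1 decay_d2 decay_d3 assms by blast+

lemma le_norm_ii1:
  assumes "decay g"
  shows "cmod (g x y p) \<le> norm_ii1 g" "sp g p \<le> norm_ii1 g" "0 \<le> norm_ii1 g"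
proof -
  show "sp g p \<le> norm_ii1 g" unfolding norm_ii1_sp
    by (rule term_le_infsum) (use decay_sp[OF assms] in auto)
  thus "cmod (g x y p) \<le> norm_ii1 g" using decay_sp(2)[OF assms, of x y p] by linarith
  thus "0 \<le> norm_ii1 g" using norm_ge_zero[of "g x y p"] by linarith
qed

lemma Lip_ge:
  assumes "a \<in> Sc c"
  shows "norm_ii1 (delta1 a) \<le> Lip c a" "norm_ii1 (delta2 c a) \<le> Lip c a" "norm_ii1 (delta3 a) \<le> Lip c a"
  unfolding Lip_def by auto

lemma Lip_nonneg: assumes "a \<in> Sc c" shows "0 \<le> Lip c a"
  using Lip_ge(1)[OF assms] le_norm_ii1(3)[OF Sc_decays(2)[OF assms]] by linarith

lemma zero_of_norm_ii1:
  assumes "decay g" "norm_ii1 g \<le> 0"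
  shows "g x y p = 0"
proof -
  have "cmod (g x y p) \<le> 0" using le_norm_ii1(1)[OF assms(1), of x y p] assms(2) by linarith
  thus ?thesis by simp
qed

lemma part1:
  assumes a: "a \<in> Asa c"
  shows "Lip c a = 0 \<longleftrightarrow> (\<exists>r::real. a = (\<lambda>x y p. complex_of_real r * unitI x y p))"
proof
  have aS: "a \<in> Sc c" using a by (simp add: Asa_def)
  assume L0: "Lip c a = 0"
  have d1: "delta1 a x y p = 0" for x y p
    by (rule zero_of_norm_ii1[OF Sc_decays(2)[OF aS]]) (use Lip_ge(1)[OF aS] L0 in simp)
  have d2: "delta2 c a x y p = 0" for x y p
    by (rule zero_of_norm_ii1[OF Sc_decays(3)[OF aS]]) (use Lip_ge(2)[OF aS] L0 in simp)
  have d3: "delta3 a x y p = 0" for x y p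
    by (rule zero_of_norm_ii1[OF Sc_decays(4)[OF aS]]) (use Lip_ge(3)[OF aS] L0 in simp)
  have ap: "a x y p = 0" if "p \<noteq> 0" for x y p
    using d3[of x y p] that by (simp add: delta3_def)
  have vx: "vector_derivative (\<lambda>t. a t y 0) (at x) = 0" for x y
    using d1[of x y 0] by (simp add: delta1_def)
  have vy: "vector_derivative (\<lambda>t. a x t 0) (at y) = 0" for x y
    using d2[of x y 0] by (simp add: delta2_def)
  have cx: "a x y 0 = a 0 y 0" for x y
  proof -
    have "((\<lambda>t. a t y 0) has_vector_derivative 0) (at x within UNIV)" for x
    proof -
      have "((\<lambda>t. a t y 0) has_vector_derivative vector_derivative (\<lambda>t. a t y 0) (at x)) (at x)"
        using Sc_diff_x[OF aS, of y 0 x] vector_derivative_works by blast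
      thus ?thesis using vx[where x=x and y=y] by simp
    qed
    then obtain k where "\<And>x. x \<in> UNIV \<Longrightarrow> a x y 0 = k"
      using has_vector_derivative_zero_constant[of UNIV "\<lambda>t. a t y 0"] by blast
    thus ?thesis by simp
  qed
  have cy: "a 0 y 0 = a 0 0 0" for y
  proof -
    have "((\<lambda>t. a 0 t 0) has_vector_derivative 0) (at y within UNIV)" for y
    proof -
      have "((\<lambda>t. a 0 t 0) has_vector_derivative vector_derivative (\<lambda>t. a 0 t 0) (at y)) (at y)"
        using Sc_diff_y[OF aS, where x=0 and p=0 and y=y] vector_derivative_works by blast
      thus ?thesis using vy[where x=0 and y=y] by simp
    qed
    then obtain k where "\<And>y. y \<in> UNIV \<Longrightarrow> a 0 y 0 = k"
      using has_vector_derivative_zero_constant[of UNIV "\<lambda>t. a 0 t 0"] by blast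
    thus ?thesis by simp
  qed
  have "star3 a = a" using a by (simp add: Asa_def)
  hence "star3 a 0 0 0 = a 0 0 0" by simp
  hence cj: "cnj (a 0 0 0) = a 0 0 0" unfolding star3_def by simp
  have r: "complex_of_real (Re (a 0 0 0)) = a 0 0 0"
  proof -
    have "Im (cnj (a 0 0 0)) = Im (a 0 0 0)" using cj by simp
    hence "Im (a 0 0 0) = 0" by simp
    thus ?thesis by (simp add: complex_eq_iff)
  qed
  show "\<exists>r::real. a = (\<lambda>x y p. complex_of_real r * unitI x y p)"
  proof (intro exI ext)
    fix x y p
    show "a x y p = complex_of_real (Re (a 0 0 0)) * unitI x y p"
      using ap[where p=p and x=x and y=y] cx[where x=x and y=y] cy[where y=y] r by (simp add: unitI_def)
  qed
next
  assume "\<exists>r::real. a = (\<lambda>x y p. complex_of_real r * unitI x y p)"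
  then obtain r where ar: "a = (\<lambda>x y p. complex_of_real r * unitI x y p)" by blast
  have e1: "delta1 a = (\<lambda>x y p. 0)"
    by (simp add: ar delta1_def unitI_def)
  have e2: "delta2 c a = (\<lambda>x y p. 0)"
    by (auto simp: ar delta2_def unitI_def fun_eq_iff)
  have e3: "delta3 a = (\<lambda>x y p. 0)"
    by (auto simp: ar delta3_def unitI_def fun_eq_iff)
  show "Lip c a = 0" unfolding Lip_def e1 e2 e3 norm_ii1_def by simp
qed


lemma nn_infsum_conv:
  fixes f :: "int \<Rightarrow> real"
  assumes "f summable_on UNIV" "\<And>q. 0 \<le> f q"
  shows "(\<integral>\<^sup>+q. ennreal (f q) \<partial>count_space UNIV) = ennreal (infsum f UNIV)"
proof -
  have "(\<lambda>q. norm (f q)) summable_on UNIV" using assms by simp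
  hence i: "integrable (count_space UNIV) f"
    using abs_summable_equivalent[of f UNIV] unfolding Infinite_Set_Sum.abs_summable_on_def by simp
  have "(\<integral>\<^sup>+q. ennreal (f q) \<partial>count_space UNIV) = ennreal (infsetsum f UNIV)"
    by (rule nn_integral_conv_infsetsum) (use i assms in \<open>auto simp: Infinite_Set_Sum.abs_summable_on_def\<close>)
  also have "infsetsum f UNIV = infsum f UNIV"
    by (rule infsetsum_infsum) (use i in \<open>simp add: Infinite_Set_Sum.abs_summable_on_def\<close>)
  finally show ?thesis .
qed

lemma nn_finite_summable:
  fixes f :: "int \<Rightarrow> real"
  assumes "(\<integral>\<^sup>+q. ennreal (f q) \<partial>count_space UNIV) \<noteq> \<infinity>" "\<And>q. 0 \<le> f q"
  shows "f summable_on UNIV"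
proof -
  have i: "integrable (count_space UNIV) f"
    by (rule integrableI_nonneg) (use assms in \<open>auto simp: top.not_eq_extremum\<close>)
  hence "(\<lambda>q. norm (f q)) summable_on UNIV"
    using abs_summable_equivalent[of f UNIV] unfolding Infinite_Set_Sum.abs_summable_on_def by simp
  thus ?thesis using assms(2) by simp
qed

lemma M_zero:
  fixes M :: "int \<Rightarrow> real"
  assumes "M summable_on UNIV" "\<And>q. 0 \<le> M q" "infsum M UNIV = 0"
  shows "M q = 0"
  using term_le_infsum[of M q] assms by (simp add: order.antisym)

lemma cs_real:
  fixes H S G :: real
  assumes H0: "0 \<le> H" and S0: "0 \<le> S" and G0: "0 \<le> G"
    and amgm: "\<And>l. l > 0 \<Longrightarrow> 2 * l * H \<le> l\<^sup>2 * S + G"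
  shows "H\<^sup>2 \<le> S * G"
proof (cases "H = 0")
  case True then show ?thesis using S0 G0 by simp
next
  case False
  hence Hp: "H > 0" using H0 by simp
  show ?thesis
  proof (cases "S = 0")
    case True
    have "2 * ((G + 1) / (2 * H)) * H \<le> ((G + 1) / (2 * H))\<^sup>2 * S + G"
      using Hp G0 by (intro amgm) (simp add: add_nonneg_pos)
    hence "G + 1 \<le> G" using Hp True by (simp add: field_simps)
    thus ?thesis by simp
  next
    case False
    hence Sp: "S > 0" using S0 by simp
    have "2 * (H / S) * H \<le> (H / S)\<^sup>2 * S + G" using Hp Sp by (intro amgm) simp
    hence "2 * H\<^sup>2 / S \<le> H\<^sup>2 / S + G" using Sp by (simp add: power2_eq_square field_simps)
    hence "H\<^sup>2 / S \<le> G" using Sp by (simp add: power2_eq_square)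
    thus ?thesis using Sp by (simp add: field_simps)
  qed
qed

lemma cs_bound:
  fixes \<beta> v :: "int \<Rightarrow> complex" and M :: "int \<Rightarrow> real"
  assumes Mb: "\<And>q. cmod (\<beta> q) \<le> M q" and Ms: "M summable_on UNIV" and M0: "\<And>q. 0 \<le> M q"
  shows "ennreal ((cmod (infsum (\<lambda>q. \<beta> q * v q) UNIV))\<^sup>2)
     \<le> ennreal (infsum M UNIV) * (\<integral>\<^sup>+q. ennreal (M q * (cmod (v q))\<^sup>2) \<partial>count_space UNIV)"
proof -
  define S where "S = infsum M UNIV"
  define T where "T = (\<integral>\<^sup>+q. ennreal (M q * (cmod (v q))\<^sup>2) \<partial>count_space UNIV)"
  have S0: "0 \<le> S" unfolding S_def by (rule infsum_nonneg) (use M0 in auto)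
  have main: "ennreal ((cmod (infsum (\<lambda>q. \<beta> q * v q) UNIV))\<^sup>2) \<le> ennreal S * T"
  proof (cases "S = 0")
    case True
    hence "M q = 0" for q using M_zero[OF Ms M0] by (simp add: S_def)
    hence "\<beta> q = 0" for q using Mb[of q] by simp
    thus ?thesis by simp
  next
    case False
    hence Sp: "S > 0" using S0 by simp
    show ?thesis
    proof (cases "T = \<infinity>")
      case True
      have "ennreal S \<noteq> 0" using Sp by simp
      hence "ennreal S * T = \<infinity>" unfolding True by (simp add: ennreal_mult_eq_top_iff)
      thus ?thesis by simp
    next
      case False
      define g where "g q = M q * (cmod (v q))\<^sup>2" for q
      have g0: "0 \<le> g q" for q unfolding g_def using M0[of q] by simp
      have gs: "g summable_on UNIV"
        by (rule nn_finite_summable) (use False g0 in \<open>simp_all add: T_def g_def\<close>)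
      have Tg: "T = ennreal (infsum g UNIV)" unfolding T_def g_def[symmetric]
        by (rule nn_infsum_conv[OF gs g0])
      define h where "h q = M q * cmod (v q)" for q
      have h0: "0 \<le> h q" for q unfolding h_def using M0[of q] by simp
      have hle: "h q \<le> (M q + g q) / 2" for q
      proof -
        have "2 * cmod (v q) \<le> 1 + (cmod (v q))\<^sup>2" using sum_squares_ge_zero[of "cmod (v q) - 1" 0]
          by (simp add: power2_eq_square algebra_simps)
        hence A: "M q * (2 * cmod (v q)) \<le> M q * (1 + (cmod (v q))\<^sup>2)" by (rule mult_left_mono) (rule M0)
        have e1: "M q * (2 * cmod (v q)) = 2 * h q" unfolding h_def by simp
        have e2: "M q * (1 + (cmod (v q))\<^sup>2) = M q + g q" unfolding g_def by (simp add: distrib_left)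
        have "2 * h q \<le> M q + g q" using A unfolding e1 e2 .
        thus ?thesis by (simp add: field_simps)
      qed
      have hs: "h summable_on UNIV"
      proof (rule summable_on_comparison_test[OF _ hle h0])
        have "(\<lambda>q. (M q + g q) * (1/2)) summable_on UNIV"
          by (rule summable_on_cmult_left[OF summable_on_add[OF Ms gs]])
        moreover have "(\<lambda>q. (M q + g q) * (1/2)) = (\<lambda>q. (M q + g q) / 2)" by (simp add: fun_eq_iff)
        ultimately show "(\<lambda>q. (M q + g q) / 2) summable_on UNIV" by simp
      qed
      have bvle: "norm (\<beta> q * v q) \<le> h q" for q
        unfolding h_def norm_mult by (rule mult_right_mono[OF Mb]) simp
      have abs: "(\<lambda>q. norm (\<beta> q * v q)) summable_on UNIV"
        by (rule summable_on_comparison_test[OF hs]) (use bvle in auto)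
      have n1: "cmod (infsum (\<lambda>q. \<beta> q * v q) UNIV) \<le> infsum h UNIV"
      proof -
        have "cmod (infsum (\<lambda>q. \<beta> q * v q) UNIV) \<le> infsum (\<lambda>q. norm (\<beta> q * v q)) UNIV"
          by (rule norm_infsum_bound) (use abs in simp)
        also have "\<dots> \<le> infsum h UNIV" by (rule infsum_mono[OF abs hs]) (rule bvle)
        finally show ?thesis .
      qed
      define H where "H = infsum h UNIV"
      define G where "G = infsum g UNIV"
      have H0: "0 \<le> H" unfolding H_def by (rule infsum_nonneg) (use h0 in auto)
      have G0: "0 \<le> G" unfolding G_def by (rule infsum_nonneg) (use g0 in auto)
      have amgm: "2 * l * H \<le> l\<^sup>2 * S + G" if lp: "l > 0" for l
      proof -
        have pt: "2 * l * h q \<le> l\<^sup>2 * M q + g q" for q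
        proof -
          have "0 \<le> M q * (l - cmod (v q))\<^sup>2" using M0[of q] by simp
          thus ?thesis by (simp add: h_def g_def power2_eq_square algebra_simps)
        qed
        have "infsum (\<lambda>q. 2 * l * h q) UNIV \<le> infsum (\<lambda>q. l\<^sup>2 * M q + g q) UNIV"
          by (rule infsum_mono) (use pt hs Ms gs in \<open>auto intro!: summable_on_cmult_right summable_on_add\<close>)
        moreover have "infsum (\<lambda>q. 2 * l * h q) UNIV = 2 * l * H"
          unfolding H_def by (rule infsum_cmult_right[OF hs])
        moreover have "infsum (\<lambda>q. l\<^sup>2 * M q + g q) UNIV = l\<^sup>2 * S + G"
          unfolding S_def G_def
          by (subst infsum_add) (use Ms gs in \<open>auto intro: summable_on_cmult_right simp: infsum_cmult_right\<close>)
        ultimately show ?thesis by simp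
      qed
      have HG: "H\<^sup>2 \<le> S * G" by (rule cs_real[OF H0 S0 G0 amgm])
      have "(cmod (infsum (\<lambda>q. \<beta> q * v q) UNIV))\<^sup>2 \<le> H\<^sup>2"
        using n1 unfolding H_def by (intro power_mono) auto
      hence "(cmod (infsum (\<lambda>q. \<beta> q * v q) UNIV))\<^sup>2 \<le> S * G" using HG by linarith
      hence "ennreal ((cmod (infsum (\<lambda>q. \<beta> q * v q) UNIV))\<^sup>2) \<le> ennreal (S * G)"
        by (rule ennreal_leI)
      also have "\<dots> = ennreal S * T" unfolding Tg G_def[symmetric] by (rule ennreal_mult[OF S0 G0])
      finally show ?thesis .
    qed
  qed
  thus ?thesis by (simp add: S_def T_def)
qed


lemma l2_core:
  fixes \<Phi> \<xi> :: fn3 and M :: "int \<Rightarrow> real"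
  assumes Mb: "\<And>x y q. cmod (\<Phi> x y q) \<le> M q" and Ms: "M summable_on UNIV" and M0: "\<And>q. 0 \<le> M q"
    and L2: "L2fun \<xi>"
  shows "l2nsq (piRep hb mu nu \<Phi> \<xi>) \<le> ennreal (infsum M UNIV) * ennreal (infsum M UNIV) * l2nsq \<xi>"
proof -
  define S where "S = infsum M UNIV"
  define D :: "(real \<times> real) set" where "D = UNIV \<times> {0..1::real}"
  have S0: "0 \<le> S" unfolding S_def by (rule infsum_nonneg) (use M0 in auto)
  have meas[measurable]: "(\<lambda>z::real\<times>real. \<xi> (fst z) (snd z) k) \<in> borel_measurable lborel" for k
    using L2 unfolding L2fun_def by blast
  have Dm[measurable]: "D \<in> sets lborel" unfolding D_def sets_lborel by (intro borel_closed closed_Times) auto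
  define J where "J k = (\<integral>\<^sup>+z. ennreal ((cmod (\<xi> (fst z) (snd z) k))\<^sup>2) * indicator D z \<partial>lborel)" for k
  define f where "f p q z = ennreal (M q * (cmod (\<xi> (fst z) (snd z) (p - q)))\<^sup>2)" for p q :: int and z :: "real \<times> real"
  have fm[measurable]: "(\<lambda>z. ennreal S * f p q z * indicator D z) \<in> borel_measurable lborel" for p q
    unfolding f_def by measurable
  have pt: "ennreal ((cmod (piRep hb mu nu \<Phi> \<xi> (fst z) (snd z) p))\<^sup>2) * indicator D z
      \<le> (\<integral>\<^sup>+q. ennreal S * f p q z * indicator D z \<partial>count_space UNIV)" for z p
  proof -
    have "ennreal ((cmod (piRep hb mu nu \<Phi> \<xi> (fst z) (snd z) p))\<^sup>2) \<le> ennreal S * (\<integral>\<^sup>+q. f p q z \<partial>count_space UNIV)"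
      unfolding piRep_def S_def f_def
      by (rule cs_bound[OF _ Ms M0]) (rule Mb)
    hence "ennreal ((cmod (piRep hb mu nu \<Phi> \<xi> (fst z) (snd z) p))\<^sup>2) * indicator D z
        \<le> ennreal S * (\<integral>\<^sup>+q. f p q z \<partial>count_space UNIV) * indicator D z"
      by (rule mult_right_mono) simp
    also have "\<dots> = (\<integral>\<^sup>+q. ennreal S * f p q z * indicator D z \<partial>count_space UNIV)"
    proof -
      have "(\<integral>\<^sup>+q. ennreal S * f p q z * indicator D z \<partial>count_space UNIV) = (\<integral>\<^sup>+q. (ennreal S * indicator D z) * f p q z \<partial>count_space UNIV)"
        by (simp add: mult_ac)
      also have "\<dots> = (ennreal S * indicator D z) * (\<integral>\<^sup>+q. f p q z \<partial>count_space UNIV)"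
        by (rule nn_integral_cmult) simp
      finally show ?thesis by (simp add: mult_ac)
    qed
    finally show ?thesis .
  qed
  have "l2nsq (piRep hb mu nu \<Phi> \<xi>) = (\<integral>\<^sup>+p. (\<integral>\<^sup>+z. ennreal ((cmod (piRep hb mu nu \<Phi> \<xi> (fst z) (snd z) p))\<^sup>2) * indicator D z \<partial>lborel) \<partial>count_space UNIV)"
    unfolding l2nsq_def D_def by simp
  also have "\<dots> \<le> (\<integral>\<^sup>+p. (\<integral>\<^sup>+z. (\<integral>\<^sup>+q. ennreal S * f p q z * indicator D z \<partial>count_space UNIV) \<partial>lborel) \<partial>count_space UNIV)"
    by (intro nn_integral_mono pt)
  also have "\<dots> = (\<integral>\<^sup>+p. (\<integral>\<^sup>+q. (\<integral>\<^sup>+z. ennreal S * f p q z * indicator D z \<partial>lborel) \<partial>count_space UNIV) \<partial>count_space UNIV)"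
    by (intro nn_integral_cong nn_integral_count_space_nn_integral) auto
  also have "\<dots> = (\<integral>\<^sup>+p. (\<integral>\<^sup>+q. ennreal S * ennreal (M q) * J (p - q) \<partial>count_space UNIV) \<partial>count_space UNIV)"
  proof (intro nn_integral_cong)
    fix p q :: int
    have "(\<integral>\<^sup>+z. ennreal S * f p q z * indicator D z \<partial>lborel)
        = (\<integral>\<^sup>+z. (ennreal S * ennreal (M q)) * (ennreal ((cmod (\<xi> (fst z) (snd z) (p - q)))\<^sup>2) * indicator D z) \<partial>lborel)"
      unfolding f_def using M0[of q] by (intro nn_integral_cong) (simp add: ennreal_mult mult.assoc)
    also have "\<dots> = ennreal S * ennreal (M q) * J (p - q)"
      unfolding J_def by (rule nn_integral_cmult) measurable
    finally show "(\<integral>\<^sup>+z. ennreal S * f p q z * indicator D z \<partial>lborel) = ennreal S * ennreal (M q) * J (p - q)" .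
  qed
  also have "\<dots> = (\<integral>\<^sup>+q. (\<integral>\<^sup>+p. ennreal S * ennreal (M q) * J (p - q) \<partial>count_space UNIV) \<partial>count_space UNIV)"
    by (rule nn_integral_count_space_nn_integral) auto
  also have "\<dots> = (\<integral>\<^sup>+q. ennreal S * ennreal (M q) * l2nsq \<xi> \<partial>count_space UNIV)"
  proof (intro nn_integral_cong)
    fix q :: int
    have "(\<integral>\<^sup>+p. ennreal S * ennreal (M q) * J (p - q) \<partial>count_space UNIV) = ennreal S * ennreal (M q) * (\<integral>\<^sup>+p. J (p - q) \<partial>count_space UNIV)"
      by (rule nn_integral_cmult) simp
    also have "(\<integral>\<^sup>+p. J (p - q) \<partial>count_space UNIV) = (\<integral>\<^sup>+p. J p \<partial>count_space UNIV)"
      by (rule nn_integral_bij_count_space) (auto intro!: bij_betwI[where g="\<lambda>p. p + q"])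
    also have "(\<integral>\<^sup>+p. J p \<partial>count_space UNIV) = l2nsq \<xi>"
      unfolding J_def l2nsq_def D_def by simp
    finally show "(\<integral>\<^sup>+p. ennreal S * ennreal (M q) * J (p - q) \<partial>count_space UNIV) = ennreal S * ennreal (M q) * l2nsq \<xi>" .
  qed
  also have "\<dots> = ennreal S * l2nsq \<xi> * (\<integral>\<^sup>+q. ennreal (M q) \<partial>count_space UNIV)"
    by (subst nn_integral_cmult[symmetric]) (simp_all add: mult_ac)
  also have "(\<integral>\<^sup>+q. ennreal (M q) \<partial>count_space UNIV) = ennreal S"
    unfolding S_def by (rule nn_infsum_conv[OF Ms M0])
  finally show ?thesis unfolding S_def by (simp add: mult_ac)
qed


lemma cnorm_bound:
  fixes \<Phi> :: fn3 and M :: "int \<Rightarrow> real"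
  assumes Mb: "\<And>x y q. cmod (\<Phi> x y q) \<le> M q" and Ms: "M summable_on UNIV" and M0: "\<And>q. 0 \<le> M q"
  shows "cnorm hb mu nu \<Phi> \<le> infsum M UNIV"
proof -
  define S where "S = infsum M UNIV"
  have S0: "0 \<le> S" unfolding S_def by (rule infsum_nonneg) (use M0 in auto)
  have "(SUP \<xi> \<in> {\<xi>. L2fun \<xi> \<and> l2nsq \<xi> \<le> 1}. l2nsq (piRep hb mu nu \<Phi> \<xi>)) \<le> ennreal (S * S)"
  proof (rule SUP_least)
    fix \<xi> assume "\<xi> \<in> {\<xi>. L2fun \<xi> \<and> l2nsq \<xi> \<le> 1}"
    hence L: "L2fun \<xi>" "l2nsq \<xi> \<le> 1" by auto
    have "l2nsq (piRep hb mu nu \<Phi> \<xi>) \<le> ennreal S * ennreal S * l2nsq \<xi>"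
      unfolding S_def by (rule l2_core[OF Mb Ms M0 L(1)])
    also have "\<dots> \<le> ennreal S * ennreal S * 1" by (rule mult_left_mono[OF L(2)]) simp
    also have "\<dots> = ennreal (S * S)" using S0 by (simp add: ennreal_mult)
    finally show "l2nsq (piRep hb mu nu \<Phi> \<xi>) \<le> ennreal (S * S)" .
  qed
  hence "enn2real (SUP \<xi> \<in> {\<xi>. L2fun \<xi> \<and> l2nsq \<xi> \<le> 1}. l2nsq (piRep hb mu nu \<Phi> \<xi>)) \<le> S * S"
    by (intro enn2real_leI) (use S0 in auto)
  hence "cnorm hb mu nu \<Phi> \<le> sqrt (S * S)" unfolding cnorm_def by (rule real_sqrt_le_mono)
  also have "sqrt (S * S) = S" using S0 by simp
  finally show ?thesis unfolding S_def .
qed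


lemma mvt_bound:
  fixes f f' :: "real \<Rightarrow> complex"
  assumes d: "\<And>t. a \<le> t \<Longrightarrow> t \<le> b \<Longrightarrow> (f has_vector_derivative f' t) (at t)"
    and B: "\<And>t. a \<le> t \<Longrightarrow> t \<le> b \<Longrightarrow> cmod (f' t) \<le> B" and ab: "a \<le> b"
  shows "cmod (f b - f a) \<le> B * (b - a)"
proof (cases "a = b")
  case True then show ?thesis by simp
next
  case False
  hence ab': "a < b" using ab by simp
  have cf: "continuous_on {a..b} f"
  proof (rule continuous_at_imp_continuous_on, rule ballI)
    fix t assume "t \<in> {a..b}"
    hence "(f has_vector_derivative f' t) (at t)" using d by auto
    thus "isCont f t" by (rule has_vector_derivative_continuous)
  qed
  have cp: "continuous_on {a..b} (\<lambda>t. B * t)" by (intro continuous_intros)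
  have dp: "((\<lambda>t. B * t) has_vector_derivative B) (at x)" for x
  proof -
    have "((\<lambda>t. B * t) has_real_derivative B) (at x)" by (auto intro!: derivative_eq_intros)
    thus ?thesis by (simp add: has_real_derivative_iff_has_vector_derivative)
  qed
  have "norm (f b - f a) \<le> B * b - B * a"
    by (rule differentiable_bound_general[OF ab' cf cp, where f'=f' and \<phi>'="\<lambda>_. B"])
       (use d B dp in auto)
  thus ?thesis by (simp add: algebra_simps)
qed

lemma mvt_bound_abs:
  fixes f f' :: "real \<Rightarrow> complex"
  assumes d: "\<And>t. 0 \<le> t \<Longrightarrow> t \<le> 1 \<Longrightarrow> (f has_vector_derivative f' t) (at t)"
    and B: "\<And>t. 0 \<le> t \<Longrightarrow> t \<le> 1 \<Longrightarrow> cmod (f' t) \<le> B"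
    and u: "0 \<le> u" "u \<le> 1" and v: "0 \<le> v" "v \<le> 1"
  shows "cmod (f u - f v) \<le> B * \<bar>u - v\<bar>"
proof (cases "v \<le> u")
  case True
  have "cmod (f u - f v) \<le> B * (u - v)" by (rule mvt_bound[where f'=f']) (use d B u v True in auto)
  thus ?thesis using True by simp
next
  case False
  have "cmod (f v - f u) \<le> B * (v - u)" by (rule mvt_bound[where f'=f']) (use d B u v False in auto)
  thus ?thesis using False by (simp add: norm_minus_commute)
qed

lemma Asa_Sc: "a \<in> Asa c \<Longrightarrow> a \<in> Sc c" by (simp add: Asa_def)

lemma Asa_scale: assumes "a \<in> Asa c" shows "(\<lambda>x y p. complex_of_real t * a x y p) \<in> Asa c"
proof -
  have "(\<lambda>x y p. complex_of_real t * a x y p + complex_of_real 0 * a x y p) \<in> Asa c"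
    by (rule Asa_lin[OF assms assms])
  thus ?thesis by simp
qed

lemma states_all:
  assumes "\<omega> \<in> states c hb mu nu"
  shows "\<omega> \<in> extensional (Asa c)"
    "\<And>a b. a \<in> Asa c \<Longrightarrow> b \<in> Asa c \<Longrightarrow> \<omega> (\<lambda>x y p. a x y p + b x y p) = \<omega> a + \<omega> b"
    "\<And>a r. a \<in> Asa c \<Longrightarrow> \<omega> (\<lambda>x y p. complex_of_real r * a x y p) = r * \<omega> a"
    "\<exists>B. \<forall>a\<in>Asa c. \<bar>\<omega> a\<bar> \<le> B * cnorm hb mu nu a"
    "\<omega> unitI = 1"
    "Sup {\<bar>\<omega> a\<bar> | a. a \<in> Asa c \<and> cnorm hb mu nu a \<le> 1} = 1"
  using assms unfolding states_def by auto

lemma cnorm_nonneg: "0 \<le> cnorm hb mu nu a" unfolding cnorm_def by simp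

lemma state_le1:
  assumes "\<omega> \<in> states c hb mu nu" "a \<in> Asa c" "cnorm hb mu nu a \<le> 1"
  shows "\<bar>\<omega> a\<bar> \<le> 1"
proof -
  obtain B where B: "\<forall>a\<in>Asa c. \<bar>\<omega> a\<bar> \<le> B * cnorm hb mu nu a" using states_all(4)[OF assms(1)] by blast
  have bdd: "bdd_above {\<bar>\<omega> a\<bar> | a. a \<in> Asa c \<and> cnorm hb mu nu a \<le> 1}"
  proof (rule bdd_aboveI)
    fix v assume "v \<in> {\<bar>\<omega> a\<bar> | a. a \<in> Asa c \<and> cnorm hb mu nu a \<le> 1}"
    then obtain b where b: "v = \<bar>\<omega> b\<bar>" "b \<in> Asa c" "cnorm hb mu nu b \<le> 1" by blast
    have "\<bar>\<omega> b\<bar> \<le> B * cnorm hb mu nu b" using B b by blast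
    also have "\<dots> \<le> max B 0 * cnorm hb mu nu b" by (intro mult_right_mono) (auto simp: cnorm_nonneg)
    also have "\<dots> \<le> max B 0 * 1" by (intro mult_left_mono b(3)) auto
    finally show "v \<le> max B 0" using b by simp
  qed
  have "\<bar>\<omega> a\<bar> \<le> Sup {\<bar>\<omega> a\<bar> | a. a \<in> Asa c \<and> cnorm hb mu nu a \<le> 1}"
    by (rule cSup_upper[OF _ bdd]) (use assms in blast)
  thus ?thesis using states_all(6)[OF assms(1)] by simp
qed

lemma state_bound:
  assumes w: "\<omega> \<in> states c hb mu nu" and b: "b \<in> Asa c"
    and Mb: "\<And>x y q. cmod (b x y q) \<le> M q" and Ms: "M summable_on UNIV" and M0: "\<And>q. 0 \<le> M q"
  shows "\<bar>\<omega> b\<bar> \<le> infsum M UNIV"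
proof -
  define S where "S = infsum M UNIV"
  have S0: "0 \<le> S" unfolding S_def by (rule infsum_nonneg) (use M0 in auto)
  show ?thesis unfolding S_def[symmetric]
  proof (cases "S = 0")
    case True
    hence "M q = 0" for q using M_zero[OF Ms M0] by (simp add: S_def)
    hence "b x y q = 0" for x y q using Mb[of x y q] by simp
    hence "b = (\<lambda>x y p. complex_of_real 0 * b x y p)" by (simp add: fun_eq_iff)
    hence "\<omega> b = 0 * \<omega> b" using states_all(3)[OF w b, of 0] by simp
    thus "\<bar>\<omega> b\<bar> \<le> S" using S0 by simp
  next
    case False
    hence Sp: "S > 0" using S0 by simp
    define b' where "b' = (\<lambda>x y p. complex_of_real (1/S) * b x y p)"
    have b'A: "b' \<in> Asa c" unfolding b'_def by (rule Asa_scale[OF b])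
    have Mb': "cmod (b' x y q) \<le> M q * (1/S)" for x y q
      using Mb[of x y q] Sp by (simp add: b'_def norm_mult norm_divide divide_right_mono)
    have "cnorm hb mu nu b' \<le> infsum (\<lambda>q. M q * (1/S)) UNIV"
      by (rule cnorm_bound[OF Mb' summable_on_cmult_left[OF Ms]]) (use M0 Sp in simp)
    also have "\<dots> = infsum M UNIV * (1/S)" by (rule infsum_cmult_left[OF Ms])
    also have "\<dots> = 1" using Sp unfolding S_def[symmetric] by simp
    finally have "\<bar>\<omega> b'\<bar> \<le> 1" by (rule state_le1[OF w b'A])
    moreover have "\<omega> b' = (1/S) * \<omega> b" unfolding b'_def by (rule states_all(3)[OF w b])
    ultimately have "\<bar>\<omega> b\<bar> / S \<le> 1" using Sp by (simp add: abs_mult)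
    thus "\<bar>\<omega> b\<bar> \<le> S" using Sp by (simp add: field_simps)
  qed
qed


lemma T_d1: assumes "a \<in> Asa c" "Lip c a \<le> 1" shows "cmod (delta1 a x y p) \<le> 1"
  using le_norm_ii1(1)[OF Sc_decays(2)[OF Asa_Sc[OF assms(1)]], of x y p] Lip_ge(1)[OF Asa_Sc[OF assms(1)]] assms(2)
  by linarith

lemma T_d2: assumes "a \<in> Asa c" "Lip c a \<le> 1" shows "cmod (delta2 c a x y p) \<le> 1"
  using le_norm_ii1(1)[OF Sc_decays(3)[OF Asa_Sc[OF assms(1)]], of x y p] Lip_ge(2)[OF Asa_Sc[OF assms(1)]] assms(2)
  by linarith

lemma T_sp3:
  assumes "a \<in> Asa c" "Lip c a \<le> 1"
  shows "sp (delta3 a) summable_on UNIV" "\<And>p. 0 \<le> sp (delta3 a) p" "infsum (sp (delta3 a)) UNIV \<le> 1"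
    "\<And>p. sp (delta3 a) p \<le> 1"
    "\<And>x y p. 2 * pi * \<bar>real_of_int p\<bar> * cmod (a x y p) \<le> sp (delta3 a) p"
proof -
  have d: "decay (delta3 a)" by (rule Sc_decays(4)[OF Asa_Sc[OF assms(1)]])
  show "sp (delta3 a) summable_on UNIV" "\<And>p. 0 \<le> sp (delta3 a) p" using decay_sp[OF d] by auto
  show i: "infsum (sp (delta3 a)) UNIV \<le> 1"
    using Lip_ge(3)[OF Asa_Sc[OF assms(1)]] assms(2) unfolding norm_ii1_sp by linarith
  show "\<And>p. sp (delta3 a) p \<le> 1" using le_norm_ii1(2)[OF d] Lip_ge(3)[OF Asa_Sc[OF assms(1)]] assms(2) by (meson order_trans)
  fix x y p
  have "cmod (delta3 a x y p) = 2 * pi * \<bar>real_of_int p\<bar> * cmod (a x y p)"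
    by (simp add: delta3_def norm_mult)
  thus "2 * pi * \<bar>real_of_int p\<bar> * cmod (a x y p) \<le> sp (delta3 a) p" using decay_sp(2)[OF d, of x y p] by simp
qed

lemma T_pa: assumes "a \<in> Asa c" "Lip c a \<le> 1" shows "2 * pi * \<bar>real_of_int p\<bar> * cmod (a x y p) \<le> 1"
  using T_sp3(5)[OF assms, of p x y] T_sp3(4)[OF assms, of p] by linarith

lemma T_lip:
  assumes A: "a \<in> Asa c" "Lip c a \<le> 1"
    and h: "0 \<le> x1" "x1 \<le> 1" "0 \<le> x2" "x2 \<le> 1" "0 \<le> y1" "y1 \<le> 1" "0 \<le> y2" "y2 \<le> 1"
  shows "cmod (a x1 y1 p - a x2 y2 p) \<le> \<bar>x1 - x2\<bar> + (real c + 1) * \<bar>y1 - y2\<bar>"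
proof -
  have aS: "a \<in> Sc c" by (rule Asa_Sc[OF A(1)])
  have px: "cmod (a x1 y2 p - a x2 y2 p) \<le> 1 * \<bar>x1 - x2\<bar>"
  proof (rule mvt_bound_abs[where f="\<lambda>t. a t y2 p" and f'="\<lambda>t. vector_derivative (\<lambda>t. a t y2 p) (at t)"])
    fix t :: real
    show "((\<lambda>t. a t y2 p) has_vector_derivative vector_derivative (\<lambda>t. a t y2 p) (at t)) (at t)"
      using Sc_diff_x[OF aS] vector_derivative_works by blast
    have "cmod (delta1 a t y2 p) \<le> 1" by (rule T_d1[OF A])
    thus "cmod (vector_derivative (\<lambda>t. a t y2 p) (at t)) \<le> 1" by (simp add: delta1_def)
  qed (use h in auto)
  have py: "cmod (a x1 y1 p - a x1 y2 p) \<le> (real c + 1) * \<bar>y1 - y2\<bar>"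
  proof (rule mvt_bound_abs[where f="\<lambda>t. a x1 t p" and f'="\<lambda>t. vector_derivative (\<lambda>t. a x1 t p) (at t)"])
    fix t :: real
    show "((\<lambda>t. a x1 t p) has_vector_derivative vector_derivative (\<lambda>t. a x1 t p) (at t)) (at t)"
      using Sc_diff_y[OF aS] vector_derivative_works by blast
    have e: "vector_derivative (\<lambda>t. a x1 t p) (at t) = 2 * complex_of_real pi * \<i> * of_nat c * of_int p * complex_of_real x1 * a x1 t p - delta2 c a x1 t p"
      by (simp add: delta2_def)
    have "cmod (vector_derivative (\<lambda>t. a x1 t p) (at t)) \<le> cmod (2 * complex_of_real pi * \<i> * of_nat c * of_int p * complex_of_real x1 * a x1 t p) + cmod (delta2 c a x1 t p)"
      unfolding e by (rule norm_triangle_ineq4)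
    also have "cmod (2 * complex_of_real pi * \<i> * of_nat c * of_int p * complex_of_real x1 * a x1 t p) = real c * \<bar>x1\<bar> * (2 * pi * \<bar>real_of_int p\<bar> * cmod (a x1 t p))"
      by (simp add: norm_mult)
    also have "\<dots> \<le> real c * 1 * 1"
      by (intro mult_mono T_pa[OF A]) (use h in auto)
    finally show "cmod (vector_derivative (\<lambda>t. a x1 t p) (at t)) \<le> real c + 1"
      using T_d2[OF A, of x1 t p] by linarith
  qed (use h in auto)
  have tri: "cmod (a x1 y1 p - a x2 y2 p) \<le> cmod (a x1 y1 p - a x1 y2 p) + cmod (a x1 y2 p - a x2 y2 p)"
    by (rule order_trans[OF _ norm_triangle_ineq]) simp
  have px': "cmod (a x1 y2 p - a x2 y2 p) \<le> \<bar>x1 - x2\<bar>" using px by simp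
  have "cmod (a x1 y1 p - a x2 y2 p) \<le> (real c + 1) * \<bar>y1 - y2\<bar> + \<bar>x1 - x2\<bar>"
    by (rule order_trans[OF tri add_mono[OF py px']])
  thus ?thesis by (simp only: add.commute)
qed

lemma norm_ii1_scale:
  assumes "decay g" "decay g'" "\<And>x y p. cmod (g' x y p) \<le> t * cmod (g x y p)" "0 \<le> t"
  shows "norm_ii1 g' \<le> t * norm_ii1 g"
proof -
  have le: "sp g' p \<le> t * sp g p" for p
  proof (rule sp_le)
    fix x y
    have "cmod (g' x y p) \<le> t * cmod (g x y p)" by (rule assms(3))
    also have "\<dots> \<le> t * sp g p" by (intro mult_left_mono decay_sp(2)[OF assms(1)] assms(4))
    finally show "cmod (g' x y p) \<le> t * sp g p" .
  qed
  have "infsum (sp g') UNIV \<le> infsum (\<lambda>p. t * sp g p) UNIV"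
    by (rule infsum_mono[OF decay_sp(1)[OF assms(2)] summable_on_cmult_right[OF decay_sp(1)[OF assms(1)]] le])
  also have "\<dots> = t * infsum (sp g) UNIV" by (rule infsum_cmult_right[OF decay_sp(1)[OF assms(1)]])
  finally show ?thesis unfolding norm_ii1_sp .
qed

lemma Lip_scale:
  assumes A: "a \<in> Asa c" and t: "0 \<le> t"
  shows "Lip c (\<lambda>x y p. complex_of_real t * a x y p) \<le> t * Lip c a"
proof -
  define b where "b = (\<lambda>x y p. complex_of_real t * a x y p)"
  have aS: "a \<in> Sc c" by (rule Asa_Sc[OF A])
  have bS: "b \<in> Sc c" unfolding b_def by (rule Asa_Sc[OF Asa_scale[OF A]])
  have e1: "delta1 b x y p = complex_of_real t * delta1 a x y p" for x y p
    unfolding b_def delta1_def using vd_cmult[OF Sc_diff_x[OF aS]] by simp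
  have e2: "delta2 c b x y p = complex_of_real t * delta2 c a x y p" for x y p
    unfolding b_def delta2_def using vd_cmult[OF Sc_diff_y[OF aS]] by (simp add: algebra_simps)
  have e3: "delta3 b x y p = complex_of_real t * delta3 a x y p" for x y p
    unfolding b_def delta3_def by (simp add: algebra_simps)
  have n1: "norm_ii1 (delta1 b) \<le> t * norm_ii1 (delta1 a)"
    by (rule norm_ii1_scale[OF Sc_decays(2)[OF aS] Sc_decays(2)[OF bS] _ t]) (simp add: e1 norm_mult t)
  have n2: "norm_ii1 (delta2 c b) \<le> t * norm_ii1 (delta2 c a)"
    by (rule norm_ii1_scale[OF Sc_decays(3)[OF aS] Sc_decays(3)[OF bS] _ t]) (simp add: e2 norm_mult t)
  have n3: "norm_ii1 (delta3 b) \<le> t * norm_ii1 (delta3 a)"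
    by (rule norm_ii1_scale[OF Sc_decays(4)[OF aS] Sc_decays(4)[OF bS] _ t]) (simp add: e3 norm_mult t)
  have "Lip c b \<le> max (t * norm_ii1 (delta1 a)) (max (t * norm_ii1 (delta2 c a)) (t * norm_ii1 (delta3 a)))"
    unfolding Lip_def using n1 n2 n3 by (meson max.mono)
  also have "\<dots> = t * Lip c a" unfolding Lip_def using t by (simp add: max_mult_distrib_left)
  finally show ?thesis unfolding b_def .
qed

lemma rho_ge:
  assumes "a \<in> Asa c" "Lip c a \<le> 1"
  shows "ereal \<bar>\<omega>1 a - \<omega>2 a\<bar> \<le> rhoL c \<omega>1 \<omega>2"
  unfolding rhoL_def by (rule Sup_upper) (use assms in blast)


lemma Asa_real:
  assumes "a \<in> Asa c" shows "complex_of_real (Re (a x y 0)) = a x y 0"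
proof -
  have "star3 a = a" using assms by (simp add: Asa_def)
  hence "star3 a x y 0 = a x y 0" by simp
  hence cj: "cnj (a x y 0) = a x y 0" unfolding star3_def by simp
  have "Im (cnj (a x y 0)) = Im (a x y 0)" using cj by simp
  hence "Im (a x y 0) = 0" by simp
  thus ?thesis by (simp add: complex_eq_iff)
qed

definition vv :: "fn3 \<Rightarrow> nat \<Rightarrow> int \<Rightarrow> nat \<Rightarrow> nat \<Rightarrow> complex" where
  "vv a K p i j = a (real i / real K) (real j / real K) p - (if p = 0 then a 0 0 0 else 0)"

definition Iset :: "nat \<Rightarrow> nat \<Rightarrow> (int \<times> nat \<times> nat) set" where
  "Iset N K = {- int N..int N} \<times> {0..K} \<times> {0..K}"

definition key :: "nat \<Rightarrow> nat \<Rightarrow> fn3 \<Rightarrow> (int \<times> nat \<times> nat \<Rightarrow> int \<times> int)" where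
  "key N K a = restrict (\<lambda>(p,i,j). (\<lfloor>Re (vv a K p i j) * real K\<rfloor>, \<lfloor>Im (vv a K p i j) * real K\<rfloor>)) (Iset N K)"

definition Tset :: "nat \<Rightarrow> fn3 set" where
  "Tset c = {a \<in> Asa c. Lip c a \<le> 1}"

lemma T_small: assumes "a \<in> Asa c" "Lip c a \<le> 1" "p \<noteq> 0" shows "cmod (a x y p) \<le> 1"
proof -
  have "1 \<le> \<bar>real_of_int p\<bar>" using assms(3) by linarith
  moreover have "1 * \<bar>real_of_int p\<bar> \<le> (2 * pi) * \<bar>real_of_int p\<bar>"
    using pi_gt3 by (intro mult_right_mono) auto
  ultimately have "1 \<le> 2 * pi * \<bar>real_of_int p\<bar>" by linarith
  hence "1 * cmod (a x y p) \<le> (2 * pi * \<bar>real_of_int p\<bar>) * cmod (a x y p)"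
    by (intro mult_right_mono) auto
  also have "\<dots> \<le> 1" using T_pa[OF assms(1,2), of p x y] by simp
  finally show ?thesis by simp
qed

lemma vv_bound:
  assumes "a \<in> Asa c" "Lip c a \<le> 1" "i \<le> K" "j \<le> K"
  shows "cmod (vv a K p i j) \<le> real c + 2"
proof (cases "p = 0")
  case True
  have x: "0 \<le> real i / real K" "real i / real K \<le> 1" using assms(3) by (auto simp: divide_le_eq_1)
  have y: "0 \<le> real j / real K" "real j / real K \<le> 1" using assms(4) by (auto simp: divide_le_eq_1)
  have "vv a K p i j = a (real i / real K) (real j / real K) 0 - a 0 0 0" using True by (simp add: vv_def)
  also have "cmod \<dots> \<le> \<bar>real i / real K - 0\<bar> + (real c + 1) * \<bar>real j / real K - 0\<bar>"
    by (rule T_lip[OF assms(1,2)]) (use x y in auto)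
  finally have "cmod (vv a K p i j) \<le> \<bar>real i / real K - 0\<bar> + (real c + 1) * \<bar>real j / real K - 0\<bar>" .
  also have "\<dots> \<le> 1 + (real c + 1) * 1" using x y by (intro add_mono mult_left_mono) auto
  finally show ?thesis by simp
next
  case False
  have "cmod (vv a K p i j) \<le> 1" using T_small[OF assms(1,2) False] False by (simp add: vv_def)
  thus ?thesis by simp
qed

lemma floor_bound:
  fixes u :: real assumes "\<bar>u\<bar> \<le> B"
  shows "\<lfloor>u\<rfloor> \<in> {- \<lceil>B\<rceil> - 1..\<lceil>B\<rceil>}"
  using assms by (auto simp: abs_le_iff) (linarith+)

lemma key_finite:
  "finite (key N K ` Tset c)"
proof -
  define Z where "Z = \<lceil>(real c + 2) * real K\<rceil>"
  have "key N K ` Tset c \<subseteq> PiE (Iset N K) (\<lambda>_. {- Z - 1..Z} \<times> {- Z - 1..Z})"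
  proof
    fix k assume "k \<in> key N K ` Tset c"
    then obtain a where a: "a \<in> Asa c" "Lip c a \<le> 1" and k: "k = key N K a" by (auto simp: Tset_def)
    show "k \<in> PiE (Iset N K) (\<lambda>_. {- Z - 1..Z} \<times> {- Z - 1..Z})"
      unfolding k key_def
    proof (rule restrict_PiE_iff[THEN iffD2], intro ballI)
      fix t assume "t \<in> Iset N K"
      then obtain p i j where t: "t = (p, i, j)" "i \<le> K" "j \<le> K" by (auto simp: Iset_def)
      have vb: "cmod (vv a K p i j) \<le> real c + 2" by (rule vv_bound[OF a t(2,3)])
      have K0: "0 \<le> real K" by simp
      have "\<bar>Re (vv a K p i j)\<bar> * real K \<le> (real c + 2) * real K"
        using abs_Re_le_cmod[of "vv a K p i j"] vb by (intro mult_right_mono) auto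
      hence "\<bar>Re (vv a K p i j) * real K\<bar> \<le> (real c + 2) * real K" by (simp add: abs_mult)
      hence r: "\<lfloor>Re (vv a K p i j) * real K\<rfloor> \<in> {- Z - 1..Z}" unfolding Z_def by (rule floor_bound)
      have "\<bar>Im (vv a K p i j)\<bar> * real K \<le> (real c + 2) * real K"
        using abs_Im_le_cmod[of "vv a K p i j"] vb by (intro mult_right_mono) auto
      hence "\<bar>Im (vv a K p i j) * real K\<bar> \<le> (real c + 2) * real K" by (simp add: abs_mult)
      hence im: "\<lfloor>Im (vv a K p i j) * real K\<rfloor> \<in> {- Z - 1..Z}" unfolding Z_def by (rule floor_bound)
      show "(case t of (p, i, j) \<Rightarrow> (\<lfloor>Re (vv a K p i j) * real K\<rfloor>, \<lfloor>Im (vv a K p i j) * real K\<rfloor>))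
            \<in> {- Z - 1..Z} \<times> {- Z - 1..Z}" using r im t(1) by simp
    qed
  qed
  moreover have "finite (PiE (Iset N K) (\<lambda>_. {- Z - 1..Z} \<times> {- Z - 1..Z}))"
    by (rule finite_PiE) (auto simp: Iset_def)
  ultimately show ?thesis by (rule finite_subset)
qed

lemma floor_close:
  fixes u v :: real and K :: nat
  assumes "\<lfloor>u * real K\<rfloor> = \<lfloor>v * real K\<rfloor>" "K > 0"
  shows "\<bar>u - v\<bar> \<le> 1 / real K"
proof -
  have "\<bar>u * real K - v * real K\<bar> \<le> 1" using assms(1) by linarith
  hence "\<bar>u - v\<bar> * real K \<le> 1" by (simp add: abs_mult left_diff_distrib[symmetric])
  thus ?thesis using assms(2) by (simp add: field_simps)
qed

lemma key_close:
  assumes "key N K a = key N K a'" "\<bar>p\<bar> \<le> int N" "i \<le> K" "j \<le> K" "K > 0"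
  shows "cmod (vv a K p i j - vv a' K p i j) \<le> 2 / real K"
proof -
  have "(p, i, j) \<in> Iset N K" using assms(2-4) by (auto simp: Iset_def)
  hence "key N K a (p,i,j) = key N K a' (p,i,j)" using assms(1) by simp
  hence e: "\<lfloor>Re (vv a K p i j) * real K\<rfloor> = \<lfloor>Re (vv a' K p i j) * real K\<rfloor>"
           "\<lfloor>Im (vv a K p i j) * real K\<rfloor> = \<lfloor>Im (vv a' K p i j) * real K\<rfloor>"
    using \<open>(p, i, j) \<in> Iset N K\<close> by (auto simp: key_def)
  have "cmod (vv a K p i j - vv a' K p i j) \<le> \<bar>Re (vv a K p i j - vv a' K p i j)\<bar> + \<bar>Im (vv a K p i j - vv a' K p i j)\<bar>"
    by (rule cmod_le)
  also have "\<dots> \<le> 1 / real K + 1 / real K"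
    using floor_close[OF e(1) assms(5)] floor_close[OF e(2) assms(5)] by (intro add_mono) auto
  finally show ?thesis by simp
qed


lemma grid_pt:
  fixes x :: real and K :: nat
  assumes "0 \<le> x" "x \<le> 1" "K > 0"
  shows "nat \<lfloor>x * real K\<rfloor> \<le> K" "0 \<le> real (nat \<lfloor>x * real K\<rfloor>) / real K"
        "real (nat \<lfloor>x * real K\<rfloor>) / real K \<le> 1" "\<bar>x - real (nat \<lfloor>x * real K\<rfloor>) / real K\<bar> \<le> 1 / real K"
proof -
  have Kp: "real K > 0" using assms(3) by simp
  have f0: "0 \<le> \<lfloor>x * real K\<rfloor>" using assms(1) Kp by simp
  have e: "real (nat \<lfloor>x * real K\<rfloor>) = of_int \<lfloor>x * real K\<rfloor>" using f0 by simp
  have fl: "of_int \<lfloor>x * real K\<rfloor> \<le> x * real K" "x * real K < of_int \<lfloor>x * real K\<rfloor> + 1"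
    by linarith+
  have xK: "x * real K \<le> real K" using assms(2) Kp by simp
  show "nat \<lfloor>x * real K\<rfloor> \<le> K" using fl(1) xK f0 e by linarith
  show "0 \<le> real (nat \<lfloor>x * real K\<rfloor>) / real K" by simp
  have h: "real (nat \<lfloor>x * real K\<rfloor>) \<le> real K" using fl(1) xK e by linarith
  show "real (nat \<lfloor>x * real K\<rfloor>) / real K \<le> 1" using h by (simp add: divide_le_eq_1_pos[OF Kp])
  have "\<bar>x * real K - real (nat \<lfloor>x * real K\<rfloor>)\<bar> \<le> 1" using fl e by linarith
  moreover have "\<bar>x - real (nat \<lfloor>x * real K\<rfloor>) / real K\<bar> * real K = \<bar>x * real K - real (nat \<lfloor>x * real K\<rfloor>)\<bar>"
  proof -
    have "(x - real (nat \<lfloor>x * real K\<rfloor>) / real K) * real K = x * real K - real (nat \<lfloor>x * real K\<rfloor>)"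
      using Kp by (simp add: field_simps)
    thus ?thesis using Kp by (metis abs_mult abs_of_pos)
  qed
  ultimately have "\<bar>x - real (nat \<lfloor>x * real K\<rfloor>) / real K\<bar> * real K \<le> 1" by simp
  thus "\<bar>x - real (nat \<lfloor>x * real K\<rfloor>) / real K\<bar> \<le> 1 / real K" using Kp by (simp add: field_simps)
qed

lemma grid_bound:
  assumes a: "a \<in> Asa c" "Lip c a \<le> 1" and a': "a' \<in> Asa c" "Lip c a' \<le> 1"
    and k: "key N K a = key N K a'" and K: "K > 0" and p: "\<bar>p\<bar> \<le> int N"
    and x: "0 \<le> x" "x \<le> 1" and y: "0 \<le> y" "y \<le> 1"
  shows "cmod (a x y p - a' x y p - complex_of_real (Re (a 0 0 0) - Re (a' 0 0 0)) * unitI x y p) \<le> (2 * real c + 6) / real K"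
proof -
  define i where "i = nat \<lfloor>x * real K\<rfloor>"
  define j where "j = nat \<lfloor>y * real K\<rfloor>"
  define gx where "gx = real i / real K"
  define gy where "gy = real j / real K"
  note gxp = grid_pt[OF x K, folded i_def, folded gx_def]
  note gyp = grid_pt[OF y K, folded j_def, folded gy_def]
  have Kp: "real K > 0" using K by simp
  define u where "u = a x y p - a gx gy p"
  define u' where "u' = a' x y p - a' gx gy p"
  have ub: "cmod u \<le> (real c + 2) / real K"
  proof -
    have "cmod u \<le> \<bar>x - gx\<bar> + (real c + 1) * \<bar>y - gy\<bar>" unfolding u_def
      by (rule T_lip[OF a]) (use x y gxp gyp in auto)
    also have "\<dots> \<le> 1 / real K + (real c + 1) * (1 / real K)"
      by (intro add_mono mult_left_mono) (use gxp gyp in auto)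
    also have "\<dots> = (real c + 2) / real K" using Kp by (simp add: field_simps)
    finally show ?thesis .
  qed
  have ub': "cmod u' \<le> (real c + 2) / real K"
  proof -
    have "cmod u' \<le> \<bar>x - gx\<bar> + (real c + 1) * \<bar>y - gy\<bar>" unfolding u'_def
      by (rule T_lip[OF a']) (use x y gxp gyp in auto)
    also have "\<dots> \<le> 1 / real K + (real c + 1) * (1 / real K)"
      by (intro add_mono mult_left_mono) (use gxp gyp in auto)
    also have "\<dots> = (real c + 2) / real K" using Kp by (simp add: field_simps)
    finally show ?thesis .
  qed
  define w where "w = vv a K p i j - vv a' K p i j"
  have wb: "cmod w \<le> 2 / real K" unfolding w_def by (rule key_close[OF k p gxp(1) gyp(1) K])
  have R: "complex_of_real (Re (a 0 0 0) - Re (a' 0 0 0)) = a 0 0 0 - a' 0 0 0"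
    using Asa_real[OF a(1), of 0 0] Asa_real[OF a'(1), of 0 0] by simp
  have eq: "a x y p - a' x y p - complex_of_real (Re (a 0 0 0) - Re (a' 0 0 0)) * unitI x y p = u - u' + w"
    unfolding R u_def u'_def w_def vv_def gx_def gy_def unitI_def by (simp add: algebra_simps)
  have "cmod (u - u' + w) \<le> cmod u + cmod u' + cmod w"
    by (metis norm_triangle_ineq norm_triangle_ineq4 add_mono order_trans order_refl)
  also have "\<dots> \<le> (real c + 2) / real K + (real c + 2) / real K + 2 / real K"
    using ub ub' wb by linarith
  also have "\<dots> = (2 * real c + 6) / real K" using Kp by (simp add: field_simps)
  finally show ?thesis unfolding eq .
qed


lemma diff_Asa:
  assumes a: "a \<in> Asa c" and a': "a' \<in> Asa c"
  shows "(\<lambda>x y p. a x y p - a' x y p - complex_of_real R * unitI x y p) \<in> Asa c"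
proof -
  have d: "(\<lambda>x y p. complex_of_real 1 * a' x y p + complex_of_real R * unitI x y p) \<in> Asa c"
    by (rule Asa_lin[OF a' unitI_Asa])
  have "(\<lambda>x y p. complex_of_real 1 * a x y p + complex_of_real (-1) * (complex_of_real 1 * a' x y p + complex_of_real R * unitI x y p)) \<in> Asa c"
    by (rule Asa_lin[OF a d])
  moreover have "(\<lambda>x y p. complex_of_real 1 * a x y p + complex_of_real (-1) * (complex_of_real 1 * a' x y p + complex_of_real R * unitI x y p))
     = (\<lambda>x y p. a x y p - a' x y p - complex_of_real R * unitI x y p)" by (simp add: fun_eq_iff)
  ultimately show ?thesis by simp
qed

lemma tail_small:
  assumes a: "a \<in> Asa c" "Lip c a \<le> 1" and N: "N > 0" and p: "int N < \<bar>p\<bar>"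
  shows "cmod (a x y p) \<le> sp (delta3 a) p / real N"
proof -
  have "real N \<le> \<bar>real_of_int p\<bar>" using p by linarith
  moreover have "1 * \<bar>real_of_int p\<bar> \<le> (2 * pi) * \<bar>real_of_int p\<bar>"
    using pi_gt3 by (intro mult_right_mono) auto
  ultimately have "real N \<le> 2 * pi * \<bar>real_of_int p\<bar>" by linarith
  hence "real N * cmod (a x y p) \<le> 2 * pi * \<bar>real_of_int p\<bar> * cmod (a x y p)" by (intro mult_right_mono) auto
  also have "\<dots> \<le> sp (delta3 a) p" by (rule T_sp3(5)[OF a])
  finally show ?thesis using N by (simp add: field_simps)
qed

lemma b_bound:
  assumes a: "a \<in> Asa c" "Lip c a \<le> 1" and a': "a' \<in> Asa c" "Lip c a' \<le> 1"
    and k: "key N K a = key N K a'" and K: "K > 0" and N: "N > 0"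
  shows "cmod (a x y p - a' x y p - complex_of_real (Re (a 0 0 0) - Re (a' 0 0 0)) * unitI x y p)
     \<le> (2 * real c + 6) / real K * (1 + (real N)\<^sup>2) / (1 + (real_of_int p)\<^sup>2) + (sp (delta3 a) p + sp (delta3 a') p) / real N"
proof -
  define R where "R = Re (a 0 0 0) - Re (a' 0 0 0)"
  define g where "g = (\<lambda>x y p. a x y p - a' x y p - complex_of_real R * unitI x y p)"
  define C where "C = (2 * real c + 6) / real K"
  have C0: "0 \<le> C" unfolding C_def by simp
  have s0: "0 \<le> (sp (delta3 a) p + sp (delta3 a') p) / real N"
    using T_sp3(2)[OF a, of p] T_sp3(2)[OF a', of p] by simp
  have gA: "g \<in> Asa c" unfolding g_def by (rule diff_Asa[OF a(1) a'(1)])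
  have pg: "per g" by (rule per_Sc[OF Asa_Sc[OF gA]])
  have w: "0 < 1 + (real_of_int p)\<^sup>2" by (simp add: add_pos_nonneg)
  show ?thesis unfolding R_def[symmetric] C_def[symmetric]
  proof (cases "\<bar>p\<bar> \<le> int N")
    case True
    have "(real_of_int p)\<^sup>2 \<le> (real N)\<^sup>2"
    proof -
      have "\<bar>real_of_int p\<bar> \<le> real N" using True by linarith
      hence "\<bar>real_of_int p\<bar>\<^sup>2 \<le> (real N)\<^sup>2" by (rule power_mono) simp
      thus ?thesis by simp
    qed
    hence "1 * (1 + (real_of_int p)\<^sup>2) \<le> (1 + (real N)\<^sup>2)" by simp
    hence r1: "1 \<le> (1 + (real N)\<^sup>2) / (1 + (real_of_int p)\<^sup>2)" using w by (simp add: le_divide_eq)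
    have "C * 1 \<le> C * ((1 + (real N)\<^sup>2) / (1 + (real_of_int p)\<^sup>2))" by (rule mult_left_mono[OF r1 C0])
    hence CM: "C \<le> C * (1 + (real N)\<^sup>2) / (1 + (real_of_int p)\<^sup>2) + (sp (delta3 a) p + sp (delta3 a') p) / real N"
      using s0 by simp
    have "cmod (g x y p) \<le> C * (1 + (real N)\<^sup>2) / (1 + (real_of_int p)\<^sup>2) + (sp (delta3 a) p + sp (delta3 a') p) / real N"
    proof (rule per_bound2[OF pg, where Q="\<lambda>v. v \<le> C * (1 + (real N)\<^sup>2) / (1 + (real_of_int p)\<^sup>2) + (sp (delta3 a) p + sp (delta3 a') p) / real N"])
      fix x y :: real assume h: "0 \<le> x" "x \<le> 1" "0 \<le> y" "y \<le> 1"
      have "cmod (g x y p) \<le> C" unfolding g_def R_def C_def by (rule grid_bound[OF a a' k K True h])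
      thus "cmod (g x y p) \<le> C * (1 + (real N)\<^sup>2) / (1 + (real_of_int p)\<^sup>2) + (sp (delta3 a) p + sp (delta3 a') p) / real N"
        using CM by linarith
    qed
    thus "cmod (a x y p - a' x y p - complex_of_real R * unitI x y p) \<le> C * (1 + (real N)\<^sup>2) / (1 + (real_of_int p)\<^sup>2) + (sp (delta3 a) p + sp (delta3 a') p) / real N"
      unfolding g_def .
  next
    case False
    hence pN: "int N < \<bar>p\<bar>" by simp
    hence "p \<noteq> 0" by auto
    hence e: "a x y p - a' x y p - complex_of_real R * unitI x y p = a x y p - a' x y p" by (simp add: unitI_def)
    have "cmod (a x y p - a' x y p - complex_of_real R * unitI x y p) \<le> cmod (a x y p) + cmod (a' x y p)"
      unfolding e by (rule norm_triangle_ineq4)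
    also have "\<dots> \<le> sp (delta3 a) p / real N + sp (delta3 a') p / real N"
      by (intro add_mono tail_small[OF a N pN] tail_small[OF a' N pN])
    also have "\<dots> = (sp (delta3 a) p + sp (delta3 a') p) / real N" by (simp add: add_divide_distrib)
    also have "\<dots> \<le> C * (1 + (real N)\<^sup>2) / (1 + (real_of_int p)\<^sup>2) + (sp (delta3 a) p + sp (delta3 a') p) / real N"
      using C0 w by simp
    finally show "cmod (a x y p - a' x y p - complex_of_real R * unitI x y p) \<le> C * (1 + (real N)\<^sup>2) / (1 + (real_of_int p)\<^sup>2) + (sp (delta3 a) p + sp (delta3 a') p) / real N" .
  qed
qed


definition Wc :: real where "Wc = infsum (\<lambda>p::int. 1 / (1 + (real_of_int p)\<^sup>2)) UNIV"

lemma Wc_nonneg: "0 \<le> Wc"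
  unfolding Wc_def by (rule infsum_nonneg) (simp add: add_nonneg_nonneg)

lemma Mf_sum:
  assumes a: "a \<in> Asa c" "Lip c a \<le> 1" and a': "a' \<in> Asa c" "Lip c a' \<le> 1" and N: "N > 0" and C0: "0 \<le> C"
  defines "Mf \<equiv> (\<lambda>p. C * (1 + (real N)\<^sup>2) / (1 + (real_of_int p)\<^sup>2) + (sp (delta3 a) p + sp (delta3 a') p) / real N)"
  shows "Mf summable_on UNIV" "\<And>p. 0 \<le> Mf p" "infsum Mf UNIV \<le> C * (1 + (real N)\<^sup>2) * Wc + 2 / real N"
proof -
  define f1 where "f1 = (\<lambda>p::int. (C * (1 + (real N)\<^sup>2)) * (1 / (1 + (real_of_int p)\<^sup>2)))"
  define f2 where "f2 = (\<lambda>p. (sp (delta3 a) p + sp (delta3 a') p) * (1 / real N))"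
  have eq: "Mf = (\<lambda>p. f1 p + f2 p)" unfolding Mf_def f1_def f2_def by (simp add: fun_eq_iff)
  have s1: "f1 summable_on UNIV" unfolding f1_def by (rule summable_on_cmult_right[OF summable_w])
  have ss: "(\<lambda>p. sp (delta3 a) p + sp (delta3 a') p) summable_on UNIV"
    by (rule summable_on_add[OF T_sp3(1)[OF a] T_sp3(1)[OF a']])
  have s2: "f2 summable_on UNIV" unfolding f2_def by (rule summable_on_cmult_left[OF ss])
  show "Mf summable_on UNIV" unfolding eq by (rule summable_on_add[OF s1 s2])
  show "\<And>p. 0 \<le> Mf p" unfolding Mf_def
    using T_sp3(2)[OF a] T_sp3(2)[OF a'] C0 by (intro add_nonneg_nonneg divide_nonneg_nonneg mult_nonneg_nonneg) auto
  have i1: "infsum f1 UNIV = C * (1 + (real N)\<^sup>2) * Wc"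
    unfolding f1_def Wc_def by (rule infsum_cmult_right[OF summable_w])
  have i2: "infsum f2 UNIV = (infsum (sp (delta3 a)) UNIV + infsum (sp (delta3 a')) UNIV) * (1 / real N)"
  proof -
    have "infsum f2 UNIV = infsum (\<lambda>p. sp (delta3 a) p + sp (delta3 a') p) UNIV * (1 / real N)"
      unfolding f2_def by (rule infsum_cmult_left[OF ss])
    also have "infsum (\<lambda>p. sp (delta3 a) p + sp (delta3 a') p) UNIV = infsum (sp (delta3 a)) UNIV + infsum (sp (delta3 a')) UNIV"
      by (rule infsum_add[OF T_sp3(1)[OF a] T_sp3(1)[OF a']])
    finally show ?thesis .
  qed
  have "(infsum (sp (delta3 a)) UNIV + infsum (sp (delta3 a')) UNIV) * (1 / real N) \<le> 2 * (1 / real N)"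
    using T_sp3(3)[OF a] T_sp3(3)[OF a'] by (intro mult_right_mono) auto
  hence "infsum f2 UNIV \<le> 2 / real N" using i2 by simp
  moreover have "infsum Mf UNIV = infsum f1 UNIV + infsum f2 UNIV" unfolding eq by (rule infsum_add[OF s1 s2])
  ultimately show "infsum Mf UNIV \<le> C * (1 + (real N)\<^sup>2) * Wc + 2 / real N" using i1 by simp
qed

lemma state_decomp:
  assumes w: "\<omega> \<in> states c hb mu nu" and a: "a \<in> Asa c" and a': "a' \<in> Asa c"
  shows "\<omega> a = \<omega> (\<lambda>x y p. a x y p - a' x y p - complex_of_real R * unitI x y p) + \<omega> a' + R"
proof -
  define b where "b = (\<lambda>x y p. a x y p - a' x y p - complex_of_real R * unitI x y p)"
  define u where "u = (\<lambda>x y p. complex_of_real 1 * a' x y p)"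
  define v where "v = (\<lambda>x y p. complex_of_real R * unitI x y p)"
  have bA: "b \<in> Asa c" unfolding b_def by (rule diff_Asa[OF a a'])
  have uA: "u \<in> Asa c" unfolding u_def by (rule Asa_scale[OF a'])
  have vA: "v \<in> Asa c" unfolding v_def by (rule Asa_scale[OF unitI_Asa])
  have dA: "(\<lambda>x y p. u x y p + v x y p) \<in> Asa c" unfolding u_def v_def by (rule Asa_lin[OF a' unitI_Asa])
  have ea: "a = (\<lambda>x y p. b x y p + (\<lambda>x y p. u x y p + v x y p) x y p)"
    unfolding b_def u_def v_def by (simp add: fun_eq_iff)
  have "\<omega> a = \<omega> b + \<omega> (\<lambda>x y p. u x y p + v x y p)"
    by (subst ea) (rule states_all(2)[OF w bA dA])
  also have "\<omega> (\<lambda>x y p. u x y p + v x y p) = \<omega> u + \<omega> v" by (rule states_all(2)[OF w uA vA])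
  also have "\<omega> u = 1 * \<omega> a'" unfolding u_def by (rule states_all(3)[OF w a'])
  also have "\<omega> v = R * \<omega> unitI" unfolding v_def by (rule states_all(3)[OF w unitI_Asa])
  also have "\<omega> unitI = 1" by (rule states_all(5)[OF w])
  finally show ?thesis unfolding b_def by simp
qed


lemma lin3: fixes A B D X Y e :: real
  shows "A \<le> X \<Longrightarrow> B \<le> X \<Longrightarrow> X \<le> Y \<Longrightarrow> D < e \<Longrightarrow> A + B + D \<le> 2 * Y + e"
  by linarith

lemma lin4: fixes U V e :: real
  shows "U \<le> e / 8 \<Longrightarrow> V \<le> e / 16 \<Longrightarrow> 2 * (U + V) + e / 8 \<le> e / 2"
  by (simp add: field_simps)

lemma hard:
  assumes e: "\<epsilon> > 0"
  shows "\<exists>A0 \<eta>. finite A0 \<and> A0 \<subseteq> Asa c \<and> \<eta> > 0 \<and>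
    (\<forall>\<omega>\<in>states c hb mu nu. \<forall>\<omega>'\<in>states c hb mu nu. (\<forall>a\<in>A0. \<bar>\<omega> a - \<omega>' a\<bar> < \<eta>) \<longrightarrow>
        (\<forall>a\<in>Asa c. Lip c a \<le> 1 \<longrightarrow> \<bar>\<omega> a - \<omega>' a\<bar> \<le> \<epsilon> / 2))"
proof -
  define N where "N = nat \<lceil>32 / \<epsilon>\<rceil> + 1"
  have Np: "N > 0" unfolding N_def by simp
  have NR: "32 / \<epsilon> \<le> real N" unfolding N_def by linarith
  have Nb: "2 / real N \<le> \<epsilon> / 16"
  proof -
    have "32 \<le> real N * \<epsilon>" using NR e by (simp add: divide_le_eq)
    thus ?thesis using Np e by (simp add: divide_le_eq field_simps)
  qed
  define Q where "Q = 8 * ((2 * real c + 6) * (1 + (real N)\<^sup>2) * (Wc + 1)) / \<epsilon>"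
  define K where "K = nat \<lceil>Q\<rceil> + 1"
  have Kp: "K > 0" unfolding K_def by simp
  have KR: "Q \<le> real K" unfolding K_def by linarith
  define C where "C = (2 * real c + 6) / real K"
  have C0: "0 \<le> C" unfolding C_def by simp
  have Cb: "C * (1 + (real N)\<^sup>2) * Wc \<le> \<epsilon> / 8"
  proof -
    have P0: "0 \<le> (2 * real c + 6) * (1 + (real N)\<^sup>2)" by simp
    have "C * (1 + (real N)\<^sup>2) * Wc \<le> C * (1 + (real N)\<^sup>2) * (Wc + 1)"
      using C0 by (intro mult_left_mono) auto
    also have "\<dots> = (2 * real c + 6) * (1 + (real N)\<^sup>2) * (Wc + 1) / real K" unfolding C_def by simp
    also have "\<dots> \<le> \<epsilon> / 8"
    proof -
      have "8 * ((2 * real c + 6) * (1 + (real N)\<^sup>2) * (Wc + 1)) / \<epsilon> \<le> real K"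
        using KR unfolding Q_def by assumption
      hence "8 * ((2 * real c + 6) * (1 + (real N)\<^sup>2) * (Wc + 1)) \<le> real K * \<epsilon>"
        by (simp only: pos_divide_le_eq[OF e])
      thus ?thesis using Kp e by (simp add: divide_le_eq field_simps)
    qed
    finally show ?thesis .
  qed
  define T where "T = Tset c"
  define rep where "rep k = (SOME a. a \<in> T \<and> key N K a = k)" for k
  have rep: "rep (key N K a) \<in> T \<and> key N K (rep (key N K a)) = key N K a" if "a \<in> T" for a
    unfolding rep_def by (rule someI[of _ a]) (use that in simp)
  define A0 where "A0 = rep ` (key N K ` T)"
  have fin: "finite A0" unfolding A0_def T_def by (intro finite_imageI key_finite)
  have sub: "A0 \<subseteq> Asa c"
  proof
    fix b assume "b \<in> A0"
    then obtain a where "a \<in> T" "b = rep (key N K a)" unfolding A0_def by blast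
    thus "b \<in> Asa c" using rep[of a] by (simp add: T_def Tset_def)
  qed
  show ?thesis
  proof (intro exI conjI ballI impI allI)
    show "finite A0" by (rule fin)
    show "A0 \<subseteq> Asa c" by (rule sub)
    show "\<epsilon> / 8 > 0" using e by simp
    fix \<omega> \<omega>' a
    assume w: "\<omega> \<in> states c hb mu nu" and w': "\<omega>' \<in> states c hb mu nu"
      and hyp: "\<forall>a\<in>A0. \<bar>\<omega> a - \<omega>' a\<bar> < \<epsilon> / 8" and aA: "a \<in> Asa c" and aL: "Lip c a \<le> 1"
    have aT: "a \<in> T" using aA aL by (simp add: T_def Tset_def)
    define a' where "a' = rep (key N K a)"
    have a'T: "a' \<in> T" and ka: "key N K a' = key N K a" using rep[OF aT] unfolding a'_def by auto
    have a'A: "a' \<in> Asa c" and a'L: "Lip c a' \<le> 1" using a'T by (auto simp: T_def Tset_def)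
    have a'0: "a' \<in> A0" unfolding A0_def a'_def using aT by blast
    define R where "R = Re (a 0 0 0) - Re (a' 0 0 0)"
    define b where "b = (\<lambda>x y p. a x y p - a' x y p - complex_of_real R * unitI x y p)"
    have bA: "b \<in> Asa c" unfolding b_def by (rule diff_Asa[OF aA a'A])
    define Mf where "Mf = (\<lambda>p. C * (1 + (real N)\<^sup>2) / (1 + (real_of_int p)\<^sup>2) + (sp (delta3 a) p + sp (delta3 a') p) / real N)"
    note MS = Mf_sum[OF aA aL a'A a'L Np C0, folded Mf_def]
    have Mb: "cmod (b x y p) \<le> Mf p" for x y p
      unfolding b_def Mf_def C_def R_def by (rule b_bound[OF aA aL a'A a'L ka[symmetric] Kp Np])
    have M0: "0 \<le> Mf p" for p unfolding Mf_def by (rule MS(2))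
    have wb: "\<bar>\<omega> b\<bar> \<le> infsum Mf UNIV" by (rule state_bound[OF w bA Mb MS(1) M0])
    have wb': "\<bar>\<omega>' b\<bar> \<le> infsum Mf UNIV" by (rule state_bound[OF w' bA Mb MS(1) M0])
    have d: "\<omega> a = \<omega> b + \<omega> a' + R" unfolding b_def by (rule state_decomp[OF w aA a'A])
    have d': "\<omega>' a = \<omega>' b + \<omega>' a' + R" unfolding b_def by (rule state_decomp[OF w' aA a'A])
    have h': "\<bar>\<omega> a' - \<omega>' a'\<bar> < \<epsilon> / 8" using hyp a'0 by blast
    have "\<bar>\<omega> a - \<omega>' a\<bar> \<le> \<bar>\<omega> b\<bar> + \<bar>\<omega>' b\<bar> + \<bar>\<omega> a' - \<omega>' a'\<bar>" unfolding d d' by linarith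
    also have "\<dots> \<le> 2 * (C * (1 + (real N)\<^sup>2) * Wc + 2 / real N) + \<epsilon> / 8"
      by (rule lin3[OF wb wb' MS(3) h'])
    also have "\<dots> \<le> \<epsilon> / 2" by (rule lin4[OF Cb Nb])
    finally show "\<bar>\<omega> a - \<omega>' a\<bar> \<le> \<epsilon> / 2" .
  qed
qed


lemma easy_dir:
  assumes V: "openin (product_topology (\<lambda>_. euclideanreal) UNIV) V" and wV: "\<omega> \<in> V"
    and w: "\<omega> \<in> states c hb mu nu"
  shows "\<exists>\<epsilon>>0. \<forall>\<omega>'\<in>states c hb mu nu. rhoL c \<omega> \<omega>' < ereal \<epsilon> \<longrightarrow> \<omega>' \<in> V"
proof -
  obtain Uf where fin: "finite {i \<in> UNIV. Uf i \<noteq> topspace euclideanreal}"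
    and op: "\<forall>i \<in> UNIV. openin euclideanreal (Uf i)" and wP: "\<omega> \<in> Pi\<^sub>E UNIV Uf" and PV: "Pi\<^sub>E UNIV Uf \<subseteq> V"
    using V wV unfolding openin_product_topology_alt by blast
  define F where "F = {i. Uf i \<noteq> UNIV}"
  have finF: "finite F" using fin unfolding F_def by simp
  have "\<forall>i\<in>F. \<exists>e>0. ball (\<omega> i) e \<subseteq> Uf i"
  proof
    fix i assume "i \<in> F"
    have "open (Uf i)" using op by simp
    moreover have "\<omega> i \<in> Uf i" using wP by (auto simp: PiE_def)
    ultimately show "\<exists>e>0. ball (\<omega> i) e \<subseteq> Uf i" by (rule open_contains_ball_eq[THEN iffD1])
  qed
  then obtain e where e: "\<And>i. i \<in> F \<Longrightarrow> e i > 0 \<and> ball (\<omega> i) (e i) \<subseteq> Uf i" by metis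
  define E where "E = insert 1 ((\<lambda>i. e i / (Lip c i + 1)) ` (F \<inter> Asa c))"
  have finE: "finite E" "E \<noteq> {}" unfolding E_def using finF by auto
  have Epos: "\<forall>v\<in>E. v > 0"
  proof
    fix v assume "v \<in> E"
    then consider "v = 1" | i where "i \<in> F" "i \<in> Asa c" "v = e i / (Lip c i + 1)" unfolding E_def by blast
    thus "v > 0"
    proof cases
      case 2
      have "0 \<le> Lip c i" by (rule Lip_nonneg[OF Asa_Sc[OF 2(2)]])
      thus ?thesis using e[OF 2(1)] 2(3) by simp
    qed simp
  qed
  define \<epsilon> where "\<epsilon> = Min E"
  have ep: "\<epsilon> > 0" unfolding \<epsilon>_def using finE Epos by (simp add: Min_gr_iff)
  show ?thesis
  proof (intro exI conjI ballI impI)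
    show "\<epsilon> > 0" by (rule ep)
    fix \<omega>' assume w': "\<omega>' \<in> states c hb mu nu" and r: "rhoL c \<omega> \<omega>' < ereal \<epsilon>"
    have all: "\<omega>' i \<in> Uf i" for i
      proof -
      show "\<omega>' i \<in> Uf i"
      proof (cases "i \<in> F")
        case False thus ?thesis unfolding F_def by simp
      next
        case iF: True
        show ?thesis
        proof (cases "i \<in> Asa c")
          case False
          have "\<omega>' i = undefined" "\<omega> i = undefined"
            using states_all(1)[OF w'] states_all(1)[OF w] False by (auto simp: extensional_def)
          moreover have "\<omega> i \<in> Uf i" using wP by (auto simp: PiE_def)
          ultimately show ?thesis by simp
        next
          case iA: True
          have L0: "0 \<le> Lip c i" by (rule Lip_nonneg[OF Asa_Sc[OF iA]])
          define t where "t = 1 / (Lip c i + 1)"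
          have tp: "t > 0" unfolding t_def using L0 by simp
          have "Lip c (\<lambda>x y p. complex_of_real t * i x y p) \<le> t * Lip c i" by (rule Lip_scale[OF iA]) (use tp in simp)
          also have "t * Lip c i \<le> 1" unfolding t_def using L0 by (simp add: field_simps)
          finally have Lt: "Lip c (\<lambda>x y p. complex_of_real t * i x y p) \<le> 1" .
          have "ereal \<bar>\<omega> (\<lambda>x y p. complex_of_real t * i x y p) - \<omega>' (\<lambda>x y p. complex_of_real t * i x y p)\<bar> \<le> rhoL c \<omega> \<omega>'"
            by (rule rho_ge[OF Asa_scale[OF iA] Lt])
          also note r
          finally have "\<bar>\<omega> (\<lambda>x y p. complex_of_real t * i x y p) - \<omega>' (\<lambda>x y p. complex_of_real t * i x y p)\<bar> < \<epsilon>" by simp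
          hence "\<bar>t * \<omega> i - t * \<omega>' i\<bar> < \<epsilon>" using states_all(3)[OF w iA, of t] states_all(3)[OF w' iA, of t] by simp
          hence lt: "t * \<bar>\<omega> i - \<omega>' i\<bar> < \<epsilon>" using tp by (simp add: abs_mult right_diff_distrib[symmetric])
          have "\<epsilon> \<le> e i / (Lip c i + 1)" unfolding \<epsilon>_def E_def using finE iF iA by (intro Min_le) (auto simp: E_def)
          also have "\<dots> = t * e i" unfolding t_def by simp
          finally have "t * \<bar>\<omega> i - \<omega>' i\<bar> < t * e i" using lt by linarith
          hence "\<bar>\<omega> i - \<omega>' i\<bar> < e i" using tp by simp
          hence "\<omega>' i \<in> ball (\<omega> i) (e i)" by (simp add: dist_real_def)
          thus ?thesis using e[OF iF] by blast
        qed
      qed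
    qed
    have "\<omega>' \<in> Pi\<^sub>E UNIV Uf" using all by (simp add: PiE_def Pi_def)
    thus "\<omega>' \<in> V" using PV by blast
  qed
qed

lemma hard_dir:
  assumes U: "U \<subseteq> states c hb mu nu"
    and R: "\<forall>\<omega>\<in>U. \<exists>\<epsilon>>0. \<forall>\<omega>'\<in>states c hb mu nu. rhoL c \<omega> \<omega>' < ereal \<epsilon> \<longrightarrow> \<omega>' \<in> U"
  shows "openin (weakstar c hb mu nu) U"
  unfolding openin_subopen[of _ U]
proof
  fix \<omega> assume wU: "\<omega> \<in> U"
  obtain \<epsilon> where ep: "\<epsilon> > 0" and eU: "\<forall>\<omega>'\<in>states c hb mu nu. rhoL c \<omega> \<omega>' < ereal \<epsilon> \<longrightarrow> \<omega>' \<in> U"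
    using R wU by blast
  obtain A0 \<eta> where fin: "finite A0" and sub: "A0 \<subseteq> Asa c" and et: "\<eta> > 0"
    and H: "\<forall>\<omega>\<in>states c hb mu nu. \<forall>\<omega>'\<in>states c hb mu nu. (\<forall>a\<in>A0. \<bar>\<omega> a - \<omega>' a\<bar> < \<eta>) \<longrightarrow>
        (\<forall>a\<in>Asa c. Lip c a \<le> 1 \<longrightarrow> \<bar>\<omega> a - \<omega>' a\<bar> \<le> \<epsilon> / 2)"
    using hard[OF ep, of c hb mu nu] by blast
  define Uf where "Uf i = (if i \<in> A0 then ball (\<omega> i) \<eta> else UNIV)" for i
  define W where "W = Pi\<^sub>E UNIV Uf \<inter> states c hb mu nu"
  have "openin (product_topology (\<lambda>_. euclideanreal) UNIV) (Pi\<^sub>E UNIV Uf)"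
  proof (subst openin_PiE_gen, rule disjI2, intro conjI ballI)
    show "finite {i \<in> UNIV. Uf i \<noteq> topspace euclideanreal}"
      by (rule finite_subset[OF _ fin]) (auto simp: Uf_def)
    fix i show "openin euclideanreal (Uf i)" by (simp add: Uf_def)
  qed
  hence Wo: "openin (weakstar c hb mu nu) W"
    unfolding weakstar_def W_def openin_subtopology by blast
  have wS: "\<omega> \<in> states c hb mu nu" using U wU by blast
  have wW: "\<omega> \<in> W" unfolding W_def using wS et by (auto simp: Uf_def PiE_def)
  have WU: "W \<subseteq> U"
  proof
    fix \<omega>' assume "\<omega>' \<in> W"
    hence w': "\<omega>' \<in> states c hb mu nu" and P: "\<omega>' \<in> Pi\<^sub>E UNIV Uf" unfolding W_def by auto
    have "\<forall>a\<in>A0. \<bar>\<omega> a - \<omega>' a\<bar> < \<eta>"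
    proof
      fix a assume "a \<in> A0"
      moreover have "\<omega>' a \<in> Uf a" using P by (simp add: PiE_def Pi_def)
      ultimately have "\<omega>' a \<in> ball (\<omega> a) \<eta>" by (simp add: Uf_def)
      thus "\<bar>\<omega> a - \<omega>' a\<bar> < \<eta>" by (simp add: dist_real_def)
    qed
    hence small: "\<forall>a\<in>Asa c. Lip c a \<le> 1 \<longrightarrow> \<bar>\<omega> a - \<omega>' a\<bar> \<le> \<epsilon> / 2" using H wS w' by blast
    have "rhoL c \<omega> \<omega>' \<le> ereal (\<epsilon> / 2)"
      unfolding rhoL_def by (rule Sup_least) (use small in auto)
    also have "\<dots> < ereal \<epsilon>" using ep by simp
    finally show "\<omega>' \<in> U" using eU w' by blast
  qed
  show "\<exists>T. openin (weakstar c hb mu nu) T \<and> \<omega> \<in> T \<and> T \<subseteq> U" using Wo wW WU by blast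
qed

theorem mainTheorem3:
  fixes c :: nat and hb mu nu :: real
  assumes "c > 0" and "mu\<^sup>2 + nu\<^sup>2 \<noteq> 0"
  shows "(\<forall>\<phi>\<in>Asa c. Lip c \<phi> = 0 \<longleftrightarrow> (\<exists>r::real. \<phi> = (\<lambda>x y p. complex_of_real r * unitI x y p)))
       \<and> (\<forall>U. openin (weakstar c hb mu nu) U \<longleftrightarrow>
              (U \<subseteq> states c hb mu nu \<and>
               (\<forall>\<omega>\<in>U. \<exists>\<epsilon>>0. \<forall>\<omega>'\<in>states c hb mu nu. rhoL c \<omega> \<omega>' < ereal \<epsilon> \<longrightarrow> \<omega>' \<in> U)))"
proof (rule conjI)
  show "\<forall>\<phi>\<in>Asa c. Lip c \<phi> = 0 \<longleftrightarrow> (\<exists>r::real. \<phi> = (\<lambda>x y p. complex_of_real r * unitI x y p))"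
    using part1 by blast
next
  show "\<forall>U. openin (weakstar c hb mu nu) U \<longleftrightarrow>
              (U \<subseteq> states c hb mu nu \<and>
               (\<forall>\<omega>\<in>U. \<exists>\<epsilon>>0. \<forall>\<omega>'\<in>states c hb mu nu. rhoL c \<omega> \<omega>' < ereal \<epsilon> \<longrightarrow> \<omega>' \<in> U))"
  proof (intro allI iffI)
  fix U assume o: "openin (weakstar c hb mu nu) U"
  then obtain V where V: "openin (product_topology (\<lambda>_. euclideanreal) UNIV) V" and UV: "U = V \<inter> states c hb mu nu"
    unfolding weakstar_def openin_subtopology by blast
  show "U \<subseteq> states c hb mu nu \<and>
        (\<forall>\<omega>\<in>U. \<exists>\<epsilon>>0. \<forall>\<omega>'\<in>states c hb mu nu. rhoL c \<omega> \<omega>' < ereal \<epsilon> \<longrightarrow> \<omega>' \<in> U)"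
  proof (intro conjI ballI)
    show "U \<subseteq> states c hb mu nu" using UV by blast
    fix \<omega> assume wU: "\<omega> \<in> U"
    have "\<omega> \<in> V" "\<omega> \<in> states c hb mu nu" using wU UV by auto
    from easy_dir[OF V this] obtain \<epsilon> where "\<epsilon> > 0"
      and "\<forall>\<omega>'\<in>states c hb mu nu. rhoL c \<omega> \<omega>' < ereal \<epsilon> \<longrightarrow> \<omega>' \<in> V" by blast
    thus "\<exists>\<epsilon>>0. \<forall>\<omega>'\<in>states c hb mu nu. rhoL c \<omega> \<omega>' < ereal \<epsilon> \<longrightarrow> \<omega>' \<in> U" using UV by blast
  qed
next
  fix U assume "U \<subseteq> states c hb mu nu \<and>
        (\<forall>\<omega>\<in>U. \<exists>\<epsilon>>0. \<forall>\<omega>'\<in>states c hb mu nu. rhoL c \<omega> \<omega>' < ereal \<epsilon> \<longrightarrow> \<omega>' \<in> U)"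
  thus "openin (weakstar c hb mu nu) U" using hard_dir by blast
qed
qed


end
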